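(* Let $B$ be a simple Bratteli diagram of rank $d\ge 2$ all of whose incidence matrices have strictly positive entries. Then both $\mathcal P_B$ and its complement $\mathcal O_B\setminus\mathcal P_B$ are dense in $\mathcal O_B$.
   Context: A Bratteli diagram $B=(V^*,E)$ consists of a vertex set $V^*=\bigsqcup_{n\ge 0}V_n$ and edge set $E=\bigsqcup_{n\ge1}E_n$, where $V_0=\{v_0\}$, all $V_n,E_n$ are finite, and there are maps $r,s:E\to V^*$ with $r(E_n)=V_n$, $s(E_n)=V_{n-1}$, $s^{-1}(v)\neq\emptyset$ for all $v$ and $r^{-1}(v)\neq\emptyset$ for $v\neq v_0$. The incidence matrix $F_n=(f^{(n)}_{v,w})_{v\in V_{n+1},w\in V_n}$ has $f^{(n)}_{v,w}$ = number of edges in $E_{n+1}$ from $w$ to $v$. $X_B$ is the space of infinite paths from $v_0$ with the cylinder topology. Standing assumptions: $B$ is aperiodic (every tail-equivalence class of $X_B$ is infinite), $X_B$ is a Cantor set, and $B$ is not a disjoint union of two subdiagrams sharing only $v_0$. $B$ is simple if for every $n$ there is $m>n$ such that every vertex of $V_n$ is joined by a path to every vertex of $V_m$; $B$ has rank $d$ if $\sup_n|V_n|<\infty$ and $d$ is the smallest integer with $|V_n|=d$ infinitely often. An ordering $\omega$ is a linear order on each $r^{-1}(v)$, $v\neq v_0$; $\mathcal O_B=\prod_{v\in V^*\setminus V_0}P_v$ where $P_v$ is the (discrete) set of linear orders on $r^{-1}(v)$, with the product topology. Maximal/minimal paths and Vershik maps are defined as usual: a Vershik map is a homeomorphism $\varphi$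 of $X_B$ mapping the set of maximal infinite paths onto the set of minimal ones, and sending each non-maximal $x$ to the path obtained by replacing the first non-maximal edge $x_k$ by its successor in $r^{-1}(r(x_k))$ and $(x_1,\dots,x_{k-1})$ by the minimal path to the source of that successor. $\omega$ is perfect if a Vershik map exists; $\mathcal P_B$ is the set of perfect orderings. *)

theory Defs
  imports "HOL-Analysis.Analysis"
begin

text \<open>
  A diagram is given by
  V :: nat => 'v set   (V n = vertices of level n),
  E :: nat => 'e set   (E n = edges of level n, n >= 1; E 0 is ignored),
  src rng :: nat => 'e => 'v  (source / range of a level-n edge),
  v0 :: 'v (the top vertex).
  Vertices are the pairs (n, v) with v in V n and edges the pairs (n, e) with e in E n,
  so that the levels are automatically disjoint.
\<close>

definition bratteli ::
  "(nat \<Rightarrow> 'v set) \<Rightarrow> (nat \<Rightarrow> 'e set) \<Rightarrow> (nat \<Rightarrow> 'e \<Rightarrow> 'v) \<Rightarrow> (nat \<Rightarrow> 'e \<Rightarrow> 'v) \<Rightarrow> 'v \<Rightarrow> bool"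
  where "bratteli V E src rng v0 \<longleftrightarrow>
     V 0 = {v0} \<and> (\<forall>n. finite (V n)) \<and> (\<forall>n\<ge>1. finite (E n)) \<and>
     (\<forall>n\<ge>1. \<forall>e\<in>E n. src n e \<in> V (n - 1) \<and> rng n e \<in> V n) \<and>
     (\<forall>n. \<forall>v\<in>V n. \<exists>e\<in>E (Suc n). src (Suc n) e = v) \<and>
     (\<forall>n\<ge>1. \<forall>v\<in>V n. \<exists>e\<in>E n. rng n e = v)"

definition incidence :: "(nat \<Rightarrow> 'e set) \<Rightarrow> (nat \<Rightarrow> 'e \<Rightarrow> 'v) \<Rightarrow> (nat \<Rightarrow> 'e \<Rightarrow> 'v) \<Rightarrow> nat \<Rightarrow> 'v \<Rightarrow> 'v \<Rightarrow> nat"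
  where "incidence E src rng n v w = card {e \<in> E (Suc n). src (Suc n) e = w \<and> rng (Suc n) e = v}"

definition positive_incidence ::
  "(nat \<Rightarrow> 'v set) \<Rightarrow> (nat \<Rightarrow> 'e set) \<Rightarrow> (nat \<Rightarrow> 'e \<Rightarrow> 'v) \<Rightarrow> (nat \<Rightarrow> 'e \<Rightarrow> 'v) \<Rightarrow> bool"
  where "positive_incidence V E src rng \<longleftrightarrow>
     (\<forall>n. \<forall>v\<in>V (Suc n). \<forall>w\<in>V n. incidence E src rng n v w > 0)"

text \<open>Infinite paths: x i is the edge of level i+1.\<close>
definition paths ::
  "(nat \<Rightarrow> 'e set) \<Rightarrow> (nat \<Rightarrow> 'e \<Rightarrow> 'v) \<Rightarrow> (nat \<Rightarrow> 'e \<Rightarrow> 'v) \<Rightarrow> 'v \<Rightarrow> (nat \<Rightarrow> 'e) set"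
  where "paths E src rng v0 = {x. (\<forall>i. x i \<in> E (Suc i)) \<and> src 1 (x 0) = v0 \<and>
            (\<forall>i. rng (Suc i) (x i) = src (Suc (Suc i)) (x (Suc i)))}"

definition path_top ::
  "(nat \<Rightarrow> 'e set) \<Rightarrow> (nat \<Rightarrow> 'e \<Rightarrow> 'v) \<Rightarrow> (nat \<Rightarrow> 'e \<Rightarrow> 'v) \<Rightarrow> 'v \<Rightarrow> (nat \<Rightarrow> 'e) topology"
  where "path_top E src rng v0 =
     subtopology (product_topology (\<lambda>i. discrete_topology (E (Suc i))) UNIV) (paths E src rng v0)"

text \<open>Finite path p_n, ..., p_(m-1) (edges of levels n+1..m) from v in V n to w in V m.\<close>
definition fin_path ::
  "(nat \<Rightarrow> 'e set) \<Rightarrow> (nat \<Rightarrow> 'e \<Rightarrow> 'v) \<Rightarrow> (nat \<Rightarrow> 'e \<Rightarrow> 'v) \<Rightarrow> nat \<Rightarrow> nat \<Rightarrow> (nat \<Rightarrow> 'e) \<Rightarrow> 'v \<Rightarrow> 'v \<Rightarrow> bool"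
  where "fin_path E src rng n m p v w \<longleftrightarrow> n < m \<and>
     (\<forall>i. n \<le> i \<and> i < m \<longrightarrow> p i \<in> E (Suc i)) \<and>
     (\<forall>i. n \<le> i \<and> Suc i < m \<longrightarrow> rng (Suc i) (p i) = src (Suc (Suc i)) (p (Suc i))) \<and>
     src (Suc n) (p n) = v \<and> rng m (p (m - 1)) = w"

definition simple_bratteli ::
  "(nat \<Rightarrow> 'v set) \<Rightarrow> (nat \<Rightarrow> 'e set) \<Rightarrow> (nat \<Rightarrow> 'e \<Rightarrow> 'v) \<Rightarrow> (nat \<Rightarrow> 'e \<Rightarrow> 'v) \<Rightarrow> bool"
  where "simple_bratteli V E src rng \<longleftrightarrow>
     (\<forall>n. \<exists>m>n. \<forall>v\<in>V n. \<forall>w\<in>V m. \<exists>p. fin_path E src rng n m p v w)"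

definition has_rank :: "(nat \<Rightarrow> 'v set) \<Rightarrow> nat \<Rightarrow> bool"
  where "has_rank V d \<longleftrightarrow> (\<exists>b. \<forall>n. card (V n) \<le> b) \<and>
     d = (LEAST k. infinite {n. card (V n) = k})"

definition aperiodic ::
  "(nat \<Rightarrow> 'e set) \<Rightarrow> (nat \<Rightarrow> 'e \<Rightarrow> 'v) \<Rightarrow> (nat \<Rightarrow> 'e \<Rightarrow> 'v) \<Rightarrow> 'v \<Rightarrow> bool"
  where "aperiodic E src rng v0 \<longleftrightarrow>
     (\<forall>x\<in>paths E src rng v0. infinite {y \<in> paths E src rng v0. \<exists>N. \<forall>i\<ge>N. y i = x i})"

definition cantor_paths ::
  "(nat \<Rightarrow> 'e set) \<Rightarrow> (nat \<Rightarrow> 'e \<Rightarrow> 'v) \<Rightarrow> (nat \<Rightarrow> 'e \<Rightarrow> 'v) \<Rightarrow> 'v \<Rightarrow> bool"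
  where "cantor_paths E src rng v0 \<longleftrightarrow>
     path_top E src rng v0 homeomorphic_space
       product_topology (\<lambda>_. discrete_topology (UNIV :: bool set)) (UNIV :: nat set)"

text \<open>B is a disjoint union of two subdiagrams sharing only v0.\<close>
definition decomposable ::
  "(nat \<Rightarrow> 'v set) \<Rightarrow> (nat \<Rightarrow> 'e set) \<Rightarrow> (nat \<Rightarrow> 'e \<Rightarrow> 'v) \<Rightarrow> (nat \<Rightarrow> 'e \<Rightarrow> 'v) \<Rightarrow> bool"
  where "decomposable V E src rng \<longleftrightarrow> (\<exists>A C :: nat \<Rightarrow> 'v set.
     (\<forall>n\<ge>1. A n \<union> C n = V n \<and> A n \<inter> C n = {}) \<and>
     (\<exists>n\<ge>1. A n \<noteq> {}) \<and> (\<exists>n\<ge>1. C n \<noteq> {}) \<and>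
     (\<forall>n\<ge>2. \<forall>e\<in>E n. (src n e \<in> A (n - 1) \<longleftrightarrow> rng n e \<in> A n)))"

definition in_edges :: "(nat \<Rightarrow> 'e set) \<Rightarrow> (nat \<Rightarrow> 'e \<Rightarrow> 'v) \<Rightarrow> nat \<Rightarrow> 'v \<Rightarrow> 'e set"
  where "in_edges E rng n v = {e \<in> E n. rng n e = v}"

text \<open>O_B: product over vertices (n,v), n >= 1, of the discrete sets of linear orders on r^-1(v).
  An ordering is a function from vertices to relations (undefined off the index set).\<close>
definition ord_top ::
  "(nat \<Rightarrow> 'v set) \<Rightarrow> (nat \<Rightarrow> 'e set) \<Rightarrow> (nat \<Rightarrow> 'e \<Rightarrow> 'v) \<Rightarrow> (nat \<times> 'v \<Rightarrow> 'e rel) topology"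
  where "ord_top V E rng = product_topology
     (\<lambda>(n, v). discrete_topology {R. linear_order_on (in_edges E rng n v) R}) (SIGMA n:{1..}. V n)"

definition is_max_edge :: "(nat \<Rightarrow> 'e set) \<Rightarrow> (nat \<Rightarrow> 'e \<Rightarrow> 'v) \<Rightarrow> (nat \<times> 'v \<Rightarrow> 'e rel) \<Rightarrow> nat \<Rightarrow> 'e \<Rightarrow> bool"
  where "is_max_edge E rng \<omega> n e \<longleftrightarrow> (\<forall>f\<in>in_edges E rng n (rng n e). (f, e) \<in> \<omega> (n, rng n e))"

definition is_min_edge :: "(nat \<Rightarrow> 'e set) \<Rightarrow> (nat \<Rightarrow> 'e \<Rightarrow> 'v) \<Rightarrow> (nat \<times> 'v \<Rightarrow> 'e rel) \<Rightarrow> nat \<Rightarrow> 'e \<Rightarrow> bool"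
  where "is_min_edge E rng \<omega> n e \<longleftrightarrow> (\<forall>f\<in>in_edges E rng n (rng n e). (e, f) \<in> \<omega> (n, rng n e))"

definition is_succ_edge :: "(nat \<Rightarrow> 'e set) \<Rightarrow> (nat \<Rightarrow> 'e \<Rightarrow> 'v) \<Rightarrow> (nat \<times> 'v \<Rightarrow> 'e rel) \<Rightarrow> nat \<Rightarrow> 'e \<Rightarrow> 'e \<Rightarrow> bool"
  where "is_succ_edge E rng \<omega> n e e' \<longleftrightarrow>
     e' \<in> in_edges E rng n (rng n e) \<and> (e, e') \<in> \<omega> (n, rng n e) \<and> e' \<noteq> e \<and>
     (\<forall>f\<in>in_edges E rng n (rng n e). (e, f) \<in> \<omega> (n, rng n e) \<and> f \<noteq> e \<longrightarrow> (e', f) \<in> \<omega> (n, rng n e))"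

definition max_paths ::
  "(nat \<Rightarrow> 'e set) \<Rightarrow> (nat \<Rightarrow> 'e \<Rightarrow> 'v) \<Rightarrow> (nat \<Rightarrow> 'e \<Rightarrow> 'v) \<Rightarrow> 'v \<Rightarrow> (nat \<times> 'v \<Rightarrow> 'e rel) \<Rightarrow> (nat \<Rightarrow> 'e) set"
  where "max_paths E src rng v0 \<omega> = {x \<in> paths E src rng v0. \<forall>i. is_max_edge E rng \<omega> (Suc i) (x i)}"

definition min_paths ::
  "(nat \<Rightarrow> 'e set) \<Rightarrow> (nat \<Rightarrow> 'e \<Rightarrow> 'v) \<Rightarrow> (nat \<Rightarrow> 'e \<Rightarrow> 'v) \<Rightarrow> 'v \<Rightarrow> (nat \<times> 'v \<Rightarrow> 'e rel) \<Rightarrow> (nat \<Rightarrow> 'e) set"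
  where "min_paths E src rng v0 \<omega> = {x \<in> paths E src rng v0. \<forall>i. is_min_edge E rng \<omega> (Suc i) (x i)}"

definition vershik_map ::
  "(nat \<Rightarrow> 'e set) \<Rightarrow> (nat \<Rightarrow> 'e \<Rightarrow> 'v) \<Rightarrow> (nat \<Rightarrow> 'e \<Rightarrow> 'v) \<Rightarrow> 'v \<Rightarrow> (nat \<times> 'v \<Rightarrow> 'e rel)
    \<Rightarrow> ((nat \<Rightarrow> 'e) \<Rightarrow> (nat \<Rightarrow> 'e)) \<Rightarrow> bool"
  where "vershik_map E src rng v0 \<omega> \<phi> \<longleftrightarrow>
     homeomorphic_map (path_top E src rng v0) (path_top E src rng v0) \<phi> \<and>
     \<phi> ` max_paths E src rng v0 \<omega> = min_paths E src rng v0 \<omega> \<and>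
     (\<forall>x \<in> paths E src rng v0 - max_paths E src rng v0 \<omega>.
        let k = (LEAST i. \<not> is_max_edge E rng \<omega> (Suc i) (x i)) in
          is_succ_edge E rng \<omega> (Suc k) (x k) (\<phi> x k) \<and>
          (\<forall>i>k. \<phi> x i = x i) \<and>
          (\<forall>i<k. is_min_edge E rng \<omega> (Suc i) (\<phi> x i)))"

definition perfect_orderings ::
  "(nat \<Rightarrow> 'v set) \<Rightarrow> (nat \<Rightarrow> 'e set) \<Rightarrow> (nat \<Rightarrow> 'e \<Rightarrow> 'v) \<Rightarrow> (nat \<Rightarrow> 'e \<Rightarrow> 'v) \<Rightarrow> 'v \<Rightarrow> (nat \<times> 'v \<Rightarrow> 'e rel) set"
  where "perfect_orderings V E src rng v0 =
     {\<omega> \<in> topspace (ord_top V E rng). \<exists>\<phi>. vershik_map E src rng v0 \<omega> \<phi>}"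

end

theory Submission
  imports Defs
begin

section \<open>Linear orders\<close>

lemma lin_min:
  assumes "linear_order_on A R" "finite S" "S \<noteq> {}" "S \<subseteq> A"
  shows "\<exists>m\<in>S. \<forall>f\<in>S. (m,f) \<in> R"
  using assms(2,3,4)
proof (induction S rule: finite_ne_induct)
  case (singleton x)
  then show ?case using assms(1)
    by (auto simp: linear_order_on_def partial_order_on_def preorder_on_def refl_on_def)
next
  case (insert x F)
  then obtain m where m: "m \<in> F" "\<forall>f\<in>F. (m,f) \<in> R" by auto
  have tr: "trans R" and tot: "total_on A R" and rf: "refl_on A R"
    using assms(1) by (auto simp: linear_order_on_def partial_order_on_def preorder_on_def)
  show ?case
  proof (cases "(x,m) \<in> R")
    case True
    then show ?thesis using m tr rf insert.prems
      by (auto simp: refl_on_def intro: transD[OF tr])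
  next
    case False
    then have "(m,x) \<in> R" using tot m insert.prems
      by (auto simp: total_on_def refl_on_def) (metis insert_subset rf refl_onD subsetD)
    then show ?thesis using m by auto
  qed
qed

lemma lin_antisym:
  "linear_order_on A R \<Longrightarrow> (x,y) \<in> R \<Longrightarrow> (y,x) \<in> R \<Longrightarrow> x = y"
  by (auto simp: linear_order_on_def partial_order_on_def antisym_def)

lemma lin_total:
  "linear_order_on A R \<Longrightarrow> x \<in> A \<Longrightarrow> y \<in> A \<Longrightarrow> (x,y) \<in> R \<or> (y,x) \<in> R"
  by (cases "x = y") (auto simp: linear_order_on_def partial_order_on_def preorder_on_def refl_on_def total_on_def)

lemma lin_trans:
  "linear_order_on A R \<Longrightarrow> (x,y) \<in> R \<Longrightarrow> (y,z) \<in> R \<Longrightarrow> (x,z) \<in> R"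
  by (auto simp: linear_order_on_def partial_order_on_def preorder_on_def dest: transD)

lemma lin_field:
  "linear_order_on A R \<Longrightarrow> (x,y) \<in> R \<Longrightarrow> x \<in> A \<and> y \<in> A"
  by (auto simp: linear_order_on_def partial_order_on_def preorder_on_def refl_on_def)

definition listord :: "'a list \<Rightarrow> 'a rel" where
  "listord L = {(L!i, L!j) | i j. i \<le> j \<and> j < length L}"

lemma listord_lin:
  assumes "distinct L"
  shows "linear_order_on (set L) (listord L)"
proof -
  have mem: "(x,y) \<in> listord L \<longleftrightarrow> (\<exists>i j. i \<le> j \<and> j < length L \<and> x = L!i \<and> y = L!j)" for x y
    unfolding listord_def by blast
  have rf: "refl_on (set L) (listord L)"
    unfolding refl_on_def mem by (auto simp: in_set_conv_nth) (metis order_refl)+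
  have tr: "trans (listord L)"
    unfolding trans_def mem
    using assms nth_eq_iff_index_eq by (smt (verit, ccfv_SIG) le_trans order.strict_trans1 linorder_not_less)
  have an: "antisym (listord L)"
    unfolding antisym_def mem
    using assms nth_eq_iff_index_eq by (smt (verit) le_antisym order.strict_trans1 linorder_not_less)
  have to: "total_on (set L) (listord L)"
    unfolding total_on_def
  proof (intro ballI impI)
    fix x y assume "x \<in> set L" "y \<in> set L" "x \<noteq> y"
    then obtain i j where "i < length L" "j < length L" "x = L!i" "y = L!j" by (auto simp: in_set_conv_nth)
    then show "(x,y) \<in> listord L \<or> (y,x) \<in> listord L" unfolding mem
      by (cases "i \<le> j") (auto, metis nat_le_linear)
  qed
  have sub: "listord L \<subseteq> set L \<times> set L" unfolding listord_def by auto
  show ?thesis using rf tr an to sub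
    by (simp add: linear_order_on_def partial_order_on_def preorder_on_def)
qed

lemma listord_first: "L \<noteq> [] \<Longrightarrow> f \<in> set L \<Longrightarrow> (hd L, f) \<in> listord L"
  unfolding listord_def by (auto simp: in_set_conv_nth hd_conv_nth)

lemma listord_last: assumes "L \<noteq> []" "f \<in> set L" shows "(f, last L) \<in> listord L"
proof -
  obtain i where "i < length L" "f = L!i" using assms(2) by (auto simp: in_set_conv_nth)
  then show ?thesis unfolding listord_def using assms(1)
    by (intro CollectI exI[of _ i] exI[of _ "length L - 1"]) (auto simp: last_conv_nth)
qed

lemma listord_second:
  assumes "distinct (a # b # L)" "f \<in> set (a # b # L)" "f \<noteq> a"
  shows "(b, f) \<in> listord (a # b # L)"
proof -
  obtain j where j: "j < length (a#b#L)" "f = (a#b#L)!j" using assms(2) unfolding in_set_conv_nth by blast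
  with assms(3) have "j \<ge> 1" by (cases j) auto
  then show ?thesis unfolding listord_def using j by (intro CollectI exI[of _ 1] exI[of _ j]) auto
qed

definition ordL :: "'a set \<Rightarrow> 'a \<Rightarrow> 'a \<Rightarrow> 'a rel" where
  "ordL A e1 e2 = listord (e1 # filter (\<lambda>x. x \<noteq> e1 \<and> x \<noteq> e2) (SOME xs. distinct xs \<and> set xs = A) @ [e2])"

definition ordF :: "'a set \<Rightarrow> 'a \<Rightarrow> 'a \<Rightarrow> 'a rel" where
  "ordF A e1 e2 = listord (e1 # e2 # filter (\<lambda>x. x \<noteq> e1 \<and> x \<noteq> e2) (SOME xs. distinct xs \<and> set xs = A))"

lemma someL: "finite A \<Longrightarrow> distinct (SOME xs. distinct xs \<and> set xs = A) \<and> set (SOME xs. distinct xs \<and> set xs = A) = A"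
  by (rule someI_ex) (use finite_distinct_list in blast)

lemma ordL:
  assumes "finite A" "e1 \<in> A" "e2 \<in> A" "e1 \<noteq> e2"
  shows "linear_order_on A (ordL A e1 e2)" "\<forall>f\<in>A. (e1,f) \<in> ordL A e1 e2" "\<forall>f\<in>A. (f,e2) \<in> ordL A e1 e2"
proof -
  define xs where "xs = (SOME xs. distinct xs \<and> set xs = A)"
  have xs: "distinct xs" "set xs = A" using someL[OF assms(1)] xs_def by auto
  define L where "L = e1 # filter (\<lambda>x. x \<noteq> e1 \<and> x \<noteq> e2) xs @ [e2]"
  have d: "distinct L" "set L = A" using xs assms unfolding L_def by auto
  have o: "ordL A e1 e2 = listord L" unfolding ordL_def L_def xs_def by simp
  show "linear_order_on A (ordL A e1 e2)" using listord_lin[OF d(1)] d o by simp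
  have ne: "L \<noteq> []" "hd L = e1" "last L = e2" by (simp_all add: L_def)
  show "\<forall>f\<in>A. (e1,f) \<in> ordL A e1 e2" using listord_first[OF ne(1)] d o ne by simp
  show "\<forall>f\<in>A. (f,e2) \<in> ordL A e1 e2" using listord_last[OF ne(1)] d o ne by simp
qed

lemma ordF:
  assumes "finite A" "e1 \<in> A" "e2 \<in> A" "e1 \<noteq> e2"
  shows "linear_order_on A (ordF A e1 e2)" "\<forall>f\<in>A. (e1,f) \<in> ordF A e1 e2"
    "\<forall>f\<in>A. f \<noteq> e1 \<longrightarrow> (e2,f) \<in> ordF A e1 e2"
proof -
  define xs where "xs = (SOME xs. distinct xs \<and> set xs = A)"
  have xs: "distinct xs" "set xs = A" using someL[OF assms(1)] xs_def by auto
  define L' where "L' = filter (\<lambda>x. x \<noteq> e1 \<and> x \<noteq> e2) xs"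
  define L where "L = e1 # e2 # L'"
  have d: "distinct L" "set L = A" using xs assms unfolding L_def L'_def by auto
  have o: "ordF A e1 e2 = listord L" unfolding ordF_def L_def L'_def xs_def by simp
  show "linear_order_on A (ordF A e1 e2)" using listord_lin[OF d(1)] d o by simp
  have ne: "L \<noteq> []" "hd L = e1" by (simp_all add: L_def)
  show "\<forall>f\<in>A. (e1,f) \<in> ordF A e1 e2" using listord_first[OF ne(1)] d o ne by simp
  show "\<forall>f\<in>A. f \<noteq> e1 \<longrightarrow> (e2,f) \<in> ordF A e1 e2" using listord_second[of e1 e2 L'] d o
    unfolding L_def by metis
qed

section \<open>Path space\<close>

lemma pathsD:
  assumes "x \<in> paths E src rng v0"
  shows "x i \<in> E (Suc i)" "src 1 (x 0) = v0" "rng (Suc i) (x i) = src (Suc (Suc i)) (x (Suc i))"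
  using assms unfolding paths_def by auto

lemma paths_vert:
  assumes "bratteli V E src rng v0" "x \<in> paths E src rng v0"
  shows "rng (Suc i) (x i) \<in> V (Suc i)" "src (Suc i) (x i) \<in> V i"
  using assms pathsD[OF assms(2)] unfolding bratteli_def
  by (metis diff_Suc_1 le_add1 plus_1_eq_Suc)+

lemma topspace_path_top [simp]: "topspace (path_top E src rng v0) = paths E src rng v0"
  unfolding path_top_def by (auto simp: paths_def PiE_def extensional_def)

lemma cyl_open_prod:
  "openin (product_topology (\<lambda>i. discrete_topology (E (Suc i))) UNIV)
     {y \<in> topspace (product_topology (\<lambda>i. discrete_topology (E (Suc i))) UNIV). \<forall>j<M. y j = x j}"
proof (induction M)
  case 0
  then show ?case using openin_topspace[of "product_topology (\<lambda>i. discrete_topology (E (Suc i))) UNIV"] by simp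
next
  case (Suc M)
  let ?P = "product_topology (\<lambda>i. discrete_topology (E (Suc i))) UNIV"
  have eq: "{y \<in> topspace ?P. \<forall>j<Suc M. y j = x j} =
     {y \<in> topspace ?P. \<forall>j<M. y j = x j} \<inter> {y \<in> topspace ?P. y M \<in> {x M} \<inter> E (Suc M)}"
    by (auto simp: less_Suc_eq PiE_iff)
  have "openin ?P {y \<in> topspace ?P. y M \<in> {x M} \<inter> E (Suc M)}"
    by (rule openin_continuous_map_preimage[OF continuous_map_product_projection]) auto
  then show ?case unfolding eq using Suc by (rule openin_Int[rotated])
qed

lemma paths_sub: "paths E src rng v0 \<subseteq> topspace (product_topology (\<lambda>i. discrete_topology (E (Suc i))) UNIV)"
proof
  fix x assume "x \<in> paths E src rng v0"
  then have "\<forall>i. x i \<in> E (Suc i)" by (simp add: paths_def)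
  then show "x \<in> topspace (product_topology (\<lambda>i. discrete_topology (E (Suc i))) UNIV)"
    by (simp add: PiE_iff)
qed

lemma path_top_eq: "path_top E src rng v0 = subtopology (product_topology (\<lambda>i. discrete_topology (E (Suc i))) UNIV) (paths E src rng v0)"
  by (simp add: path_top_def)

lemma cyl_open:
  "openin (path_top E src rng v0) {y \<in> paths E src rng v0. \<forall>j<M. y j = x j}"
proof -
  let ?P = "product_topology (\<lambda>i. discrete_topology (E (Suc i))) UNIV"
  have "{y \<in> paths E src rng v0. \<forall>j<M. y j = x j} =
      {y \<in> topspace ?P. \<forall>j<M. y j = x j} \<inter> paths E src rng v0"
    using paths_sub[of E src rng v0] by blast
  then show ?thesis unfolding path_top_def openin_subtopology
    by (intro exI[of _ "{y \<in> topspace ?P. \<forall>j<M. y j = x j}"] conjI cyl_open_prod)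
qed

lemma cont_from_loc:
  assumes "\<And>x. x \<in> paths E src rng v0 \<Longrightarrow> f x \<in> paths E src rng v0"
    and "\<And>x i. x \<in> paths E src rng v0 \<Longrightarrow> \<exists>M. \<forall>y\<in>paths E src rng v0. (\<forall>j<M. y j = x j) \<longrightarrow> f y i = f x i"
  shows "continuous_map (path_top E src rng v0) (path_top E src rng v0) f"
proof -
  let ?P = "product_topology (\<lambda>i. discrete_topology (E (Suc i))) UNIV"
  have "continuous_map (path_top E src rng v0) (discrete_topology (E (Suc k))) (\<lambda>x. f x k)" for k
    unfolding continuous_map
  proof (intro conjI allI impI)
    show "(\<lambda>x. f x k) ` topspace (path_top E src rng v0) \<subseteq> topspace (discrete_topology (E (Suc k)))"
    proof (rule image_subsetI)
      fix x assume "x \<in> topspace (path_top E src rng v0)"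
      then have "f x \<in> paths E src rng v0" using assms(1) by simp
      then have "f x k \<in> E (Suc k)" by (rule pathsD(1))
      then show "f x k \<in> topspace (discrete_topology (E (Suc k)))" by simp
    qed
    fix U assume "openin (discrete_topology (E (Suc k))) U"
    show "openin (path_top E src rng v0) {x \<in> topspace (path_top E src rng v0). f x k \<in> U}"
    proof (subst openin_subopen, intro ballI)
      fix x assume x: "x \<in> {x \<in> topspace (path_top E src rng v0). f x k \<in> U}"
      then obtain M where M: "\<forall>y\<in>paths E src rng v0. (\<forall>j<M. y j = x j) \<longrightarrow> f y k = f x k"
        using assms(2)[of x k] by auto
      have "{y \<in> paths E src rng v0. \<forall>j<M. y j = x j} \<subseteq> {x \<in> topspace (path_top E src rng v0). f x k \<in> U}"
      proof
        fix y assume "y \<in> {y \<in> paths E src rng v0. \<forall>j<M. y j = x j}"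
        then have "y \<in> paths E src rng v0" "f y k = f x k" using M by auto
        then show "y \<in> {x \<in> topspace (path_top E src rng v0). f x k \<in> U}" using x by simp
      qed
      moreover have "x \<in> {y \<in> paths E src rng v0. \<forall>j<M. y j = x j}" using x by simp
      ultimately show "\<exists>T. openin (path_top E src rng v0) T \<and> x \<in> T \<and> T \<subseteq> {x \<in> topspace (path_top E src rng v0). f x k \<in> U}"
        by (intro exI[of _ "{y \<in> paths E src rng v0. \<forall>j<M. y j = x j}"] conjI cyl_open)
    qed
  qed
  then have cm: "continuous_map (path_top E src rng v0) ?P f"
    unfolding continuous_map_componentwise_UNIV by simp
  have "continuous_map (path_top E src rng v0) (subtopology ?P (paths E src rng v0)) f"
    unfolding continuous_map_in_subtopology using cm assms(1) by (simp add: Pi_iff)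
  then show ?thesis by (simp only: path_top_eq[symmetric])
qed

lemma loc_from_cont:
  assumes "continuous_map (path_top E src rng v0) (path_top E src rng v0) f" "x \<in> paths E src rng v0"
  shows "\<exists>M. \<forall>y\<in>paths E src rng v0. (\<forall>j<M. y j = x j) \<longrightarrow> f y c = f x c"
proof -
  let ?P = "product_topology (\<lambda>i. discrete_topology (E (Suc i))) UNIV"
  have cp: "continuous_map (path_top E src rng v0) (discrete_topology (E (Suc c))) (\<lambda>y. y c)"
    unfolding path_top_eq by (rule continuous_map_from_subtopology, rule continuous_map_product_projection) simp
  have "continuous_map (path_top E src rng v0) (discrete_topology (E (Suc c))) (\<lambda>x. f x c)"
    using continuous_map_compose[OF assms(1) cp] by (simp add: o_def)
  moreover have "f x \<in> f ` topspace (path_top E src rng v0)" using assms(2) by simp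
  then have "f x \<in> topspace (path_top E src rng v0)"
    using continuous_map_image_subset_topspace[OF assms(1)] by blast
  then have "f x \<in> paths E src rng v0" by simp
  then have fx: "f x c \<in> E (Suc c)" by (rule pathsD(1))
  ultimately have "openin (path_top E src rng v0) {y \<in> topspace (path_top E src rng v0). f y c \<in> {f x c}}"
    by (intro openin_continuous_map_preimage) auto
  then obtain T where T: "openin ?P T" "{y \<in> paths E src rng v0. f y c = f x c} = T \<inter> paths E src rng v0"
    unfolding path_top_def openin_subtopology by (auto simp: path_top_def[symmetric])
  have "x \<in> {y \<in> paths E src rng v0. f y c = f x c}" using assms(2) by simp
  then have "x \<in> T" using T(2) by blast
  from product_topology_open_contains_basis[OF T(1) this] obtain X where
    X: "x \<in> (\<Pi>\<^sub>E i\<in>UNIV. X i)" "\<forall>i. openin (discrete_topology (E (Suc i))) (X i)"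
       "finite {i. X i \<noteq> topspace (discrete_topology (E (Suc i)))}" "(\<Pi>\<^sub>E i\<in>UNIV. X i) \<subseteq> T" by blast
  define J where "J = {i. X i \<noteq> E (Suc i)}"
  have fJ: "finite J" using X(3) by (simp add: J_def)
  define M where "M = Suc (Max (insert 0 J))"
  have JM: "j \<in> J \<Longrightarrow> j < M" for j using fJ by (auto simp: M_def le_imp_less_Suc)
  show ?thesis
  proof (intro exI ballI impI)
    fix y assume y: "y \<in> paths E src rng v0" "\<forall>j<M. y j = x j"
    have "y \<in> (\<Pi>\<^sub>E i\<in>UNIV. X i)"
    proof (auto simp: PiE_def extensional_def)
      fix i show "y i \<in> X i"
      proof (cases "i \<in> J")
        case True then show ?thesis using JM y X(1) by auto
      next
        case False then show ?thesis using pathsD(1)[OF y(1)] by (auto simp: J_def)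
      qed
    qed
    then have "y \<in> T" using X(4) by auto
    then have "y \<in> T \<inter> paths E src rng v0" using y(1) by blast
    then show "f y c = f x c" using T(2) by blast
  qed
qed

lemma is_min_conv [simp]: "is_min_edge E rng (\<lambda>p. (\<omega> p)\<inverse>) n e \<longleftrightarrow> is_max_edge E rng \<omega> n e"
  by (simp add: is_min_edge_def is_max_edge_def)

lemma is_max_conv [simp]: "is_max_edge E rng (\<lambda>p. (\<omega> p)\<inverse>) n e \<longleftrightarrow> is_min_edge E rng \<omega> n e"
  by (simp add: is_min_edge_def is_max_edge_def)

definition fpm :: "(nat \<Rightarrow> 'e set) \<Rightarrow> (nat \<Rightarrow> 'e \<Rightarrow> 'v) \<Rightarrow> (nat \<Rightarrow> 'e \<Rightarrow> 'v) \<Rightarrow> 'v \<Rightarrow> nat \<Rightarrow> (nat \<Rightarrow> 'e) \<Rightarrow> 'v \<Rightarrow> bool" where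
  "fpm E src rng v0 m p u \<longleftrightarrow> (\<forall>i<m. p i \<in> E (Suc i)) \<and>
     (\<forall>i. Suc i < m \<longrightarrow> rng (Suc i) (p i) = src (Suc (Suc i)) (p (Suc i))) \<and>
     (0 < m \<longrightarrow> src 1 (p 0) = v0 \<and> rng m (p (m - 1)) = u)"

locale ordl =
  fixes V :: "nat \<Rightarrow> 'v set" and E :: "nat \<Rightarrow> 'e set" and src rng :: "nat \<Rightarrow> 'e \<Rightarrow> 'v"
    and v0 :: 'v and \<omega> :: "nat \<times> 'v \<Rightarrow> 'e rel"
  assumes br: "bratteli V E src rng v0"
    and lin: "\<And>n v. 1 \<le> n \<Longrightarrow> v \<in> V n \<Longrightarrow> linear_order_on (in_edges E rng n v) (\<omega> (n,v))"
begin

lemma V0: "V 0 = {v0}" using br by (simp add: bratteli_def)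

lemma fin_in: "1 \<le> n \<Longrightarrow> finite (in_edges E rng n v)"
  using br by (auto simp: bratteli_def in_edges_def)

lemma ne_in: assumes "1 \<le> n" "v \<in> V n" shows "in_edges E rng n v \<noteq> {}"
proof -
  from br have "\<forall>n\<ge>1. \<forall>v\<in>V n. \<exists>e\<in>E n. rng n e = v" by (simp add: bratteli_def)
  then obtain e where "e \<in> E n" "rng n e = v" using assms by blast
  then show ?thesis by (auto simp: in_edges_def)
qed

lemma edge_vert: "1 \<le> n \<Longrightarrow> e \<in> E n \<Longrightarrow> src n e \<in> V (n - 1) \<and> rng n e \<in> V n"
  using br by (auto simp: bratteli_def)

lemma edge_vertS: "e \<in> E (Suc n) \<Longrightarrow> src (Suc n) e \<in> V n \<and> rng (Suc n) e \<in> V (Suc n)"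
  using edge_vert[of "Suc n" e] by simp

lemma linE: "1 \<le> n \<Longrightarrow> e \<in> E n \<Longrightarrow> linear_order_on (in_edges E rng n (rng n e)) (\<omega> (n, rng n e))"
  using lin edge_vert by blast

lemma in_edgesI: "e \<in> E n \<Longrightarrow> e \<in> in_edges E rng n (rng n e)"
  by (simp add: in_edges_def)

lemma mine_ex:
  assumes "1 \<le> n" "v \<in> V n"
  shows "\<exists>e. e \<in> in_edges E rng n v \<and> is_min_edge E rng \<omega> n e"
proof -
  obtain m where m: "m \<in> in_edges E rng n v" "\<forall>f\<in>in_edges E rng n v. (m,f) \<in> \<omega> (n,v)"
    using lin_min[OF lin[OF assms] fin_in[OF assms(1)] ne_in[OF assms]] by blast
  then have "rng n m = v" by (simp add: in_edges_def)
  then show ?thesis using m by (auto simp: is_min_edge_def)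
qed

lemma min_unique:
  assumes "1 \<le> n" "e1 \<in> in_edges E rng n v" "e2 \<in> in_edges E rng n v"
    "is_min_edge E rng \<omega> n e1" "is_min_edge E rng \<omega> n e2"
  shows "e1 = e2"
proof -
  have r: "rng n e1 = v" "rng n e2 = v" "v \<in> V n" using assms(2,3) edge_vert[OF assms(1)] by (auto simp: in_edges_def)
  have "(e1,e2) \<in> \<omega> (n,v)" "(e2,e1) \<in> \<omega> (n,v)" using assms r by (auto simp: is_min_edge_def)
  then show ?thesis using lin_antisym[OF lin[OF assms(1) r(3)]] by blast
qed

definition mine where "mine n v = (THE e. e \<in> in_edges E rng n v \<and> is_min_edge E rng \<omega> n e)"

lemma mine:
  assumes "1 \<le> n" "v \<in> V n"
  shows "mine n v \<in> in_edges E rng n v \<and> is_min_edge E rng \<omega> n (mine n v)"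
proof -
  have "\<exists>!e. e \<in> in_edges E rng n v \<and> is_min_edge E rng \<omega> n e"
    using mine_ex[OF assms] min_unique[OF assms(1)] by blast
  then show ?thesis unfolding mine_def by (rule theI')
qed

lemma mine_eq:
  assumes "1 \<le> n" "v \<in> V n" "e \<in> in_edges E rng n v" "is_min_edge E rng \<omega> n e"
  shows "mine n v = e"
  using min_unique[OF assms(1) _ assms(3) _ assms(4)] mine[OF assms(1,2)] by blast

primrec minpath :: "nat \<Rightarrow> 'v \<Rightarrow> nat \<Rightarrow> 'e" where
  "minpath 0 u = (\<lambda>i. undefined)"
| "minpath (Suc m) u = (minpath m (src (Suc m) (mine (Suc m) u))) (m := mine (Suc m) u)"

declare minpath.simps(2)[simp del]

lemma minpath_props:
  "u \<in> V m \<Longrightarrow> fpm E src rng v0 m (minpath m u) u \<and> (\<forall>i<m. is_min_edge E rng \<omega> (Suc i) (minpath m u i))"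
proof (induction m arbitrary: u)
  case 0
  then show ?case by (simp add: fpm_def)
next
  case (Suc m)
  define e where "e = mine (Suc m) u"
  have e: "e \<in> in_edges E rng (Suc m) u" "is_min_edge E rng \<omega> (Suc m) e"
    using mine[of "Suc m" u] Suc.prems by (auto simp: e_def)
  have eE: "e \<in> E (Suc m)" "rng (Suc m) e = u" using e by (auto simp: in_edges_def)
  define u' where "u' = src (Suc m) e"
  have u': "u' \<in> V m" using edge_vertS[OF eE(1)] by (simp add: u'_def)
  note IH = Suc.IH[OF u']
  have mp: "minpath (Suc m) u = (minpath m u')(m := e)" by (simp add: e_def u'_def minpath.simps(2))
  have A: "\<forall>i<Suc m. minpath (Suc m) u i \<in> E (Suc i)"
    using IH eE unfolding mp fpm_def by (auto simp: less_Suc_eq)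
  have B: "\<forall>i. Suc i < Suc m \<longrightarrow> rng (Suc i) (minpath (Suc m) u i) = src (Suc (Suc i)) (minpath (Suc m) u (Suc i))"
  proof (intro allI impI)
    fix i assume i: "Suc i < Suc m"
    show "rng (Suc i) (minpath (Suc m) u i) = src (Suc (Suc i)) (minpath (Suc m) u (Suc i))"
    proof (cases "Suc i = m")
      case True
      then have "rng m (minpath m u' (m - 1)) = u'" using IH unfolding fpm_def by auto
      then show ?thesis unfolding mp using True by (auto simp: u'_def)
    next
      case False
      then show ?thesis using IH i unfolding mp fpm_def by auto
    qed
  qed
  have C: "src 1 (minpath (Suc m) u 0) = v0"
  proof (cases m)
    case 0
    then show ?thesis using u' V0 unfolding mp by (simp add: u'_def)
  next
    case (Suc m')
    then show ?thesis using IH unfolding mp fpm_def by auto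
  qed
  have D: "rng (Suc m) (minpath (Suc m) u m) = u" unfolding mp using eE by simp
  have F: "\<forall>i<Suc m. is_min_edge E rng \<omega> (Suc i) (minpath (Suc m) u i)"
    using IH e unfolding mp by (auto simp: less_Suc_eq)
  show ?case using A B C D F unfolding fpm_def by simp
qed

lemma minpath_unique:
  "fpm E src rng v0 m p u \<Longrightarrow> (\<forall>i<m. is_min_edge E rng \<omega> (Suc i) (p i)) \<Longrightarrow> u \<in> V m \<Longrightarrow>
    \<forall>i<m. p i = minpath m u i"
proof (induction m arbitrary: u)
  case 0
  then show ?case by simp
next
  case (Suc m)
  have pm: "p m \<in> E (Suc m)" "rng (Suc m) (p m) = u" using Suc.prems(1) unfolding fpm_def by auto
  have "mine (Suc m) u = p m"
    using mine_eq[of "Suc m" u "p m"] Suc.prems pm by (auto simp: in_edges_def)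
  define u' where "u' = src (Suc m) (p m)"
  have u': "u' \<in> V m" using edge_vertS[OF pm(1)] by (simp add: u'_def)
  have f': "fpm E src rng v0 m p u'"
    using Suc.prems(1) unfolding fpm_def u'_def
    by (auto, metis Suc_pred lessI)
  have "\<forall>i<m. p i = minpath m u' i" using Suc.IH[OF f' _ u'] Suc.prems(2) by auto
  then show ?case using \<open>mine (Suc m) u = p m\<close> by (auto simp: less_Suc_eq u'_def minpath.simps(2))
qed

lemma succ_ex:
  assumes "1 \<le> n" "e \<in> E n" "\<not> is_max_edge E rng \<omega> n e"
  shows "\<exists>e'. is_succ_edge E rng \<omega> n e e'"
proof -
  define v where "v = rng n e"
  define A where "A = in_edges E rng n v"
  have L: "linear_order_on A (\<omega> (n,v))" using linE[OF assms(1,2)] by (simp add: A_def v_def)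
  obtain f where f: "f \<in> A" "(f,e) \<notin> \<omega> (n,v)" using assms(3) by (auto simp: is_max_edge_def A_def v_def)
  have eA: "e \<in> A" by (simp add: A_def v_def in_edgesI assms(2))
  have "(e,f) \<in> \<omega> (n,v)" using lin_total[OF L eA f(1)] f(2) by blast
  moreover have "f \<noteq> e" using f(2) L eA
    by (auto simp: linear_order_on_def partial_order_on_def preorder_on_def refl_on_def)
  ultimately have "{g\<in>A. (e,g) \<in> \<omega> (n,v) \<and> g \<noteq> e} \<noteq> {}" using f(1) by blast
  moreover have "finite {g\<in>A. (e,g) \<in> \<omega> (n,v) \<and> g \<noteq> e}" using fin_in[OF assms(1)] by (simp add: A_def)
  ultimately obtain m where m: "m \<in> {g\<in>A. (e,g) \<in> \<omega> (n,v) \<and> g \<noteq> e}"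
      "\<forall>g\<in>{g\<in>A. (e,g) \<in> \<omega> (n,v) \<and> g \<noteq> e}. (m,g) \<in> \<omega> (n,v)"
    using lin_min[OF L] by (metis (no_types, lifting) mem_Collect_eq subsetI)
  then have "is_succ_edge E rng \<omega> n e m" unfolding is_succ_edge_def using m
    by (simp add: A_def v_def)
  then show ?thesis by blast
qed

lemma succ_unique:
  assumes "1 \<le> n" "e \<in> E n" "is_succ_edge E rng \<omega> n e e1" "is_succ_edge E rng \<omega> n e e2"
  shows "e1 = e2"
proof -
  have "(e1,e2) \<in> \<omega> (n, rng n e)" "(e2,e1) \<in> \<omega> (n, rng n e)"
    using assms(3,4) unfolding is_succ_edge_def by auto
  then show ?thesis using lin_antisym[OF linE[OF assms(1,2)]] by blast
qed

lemma succ_props: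
  assumes "is_succ_edge E rng \<omega> n e e'"
  shows "e' \<in> E n" "rng n e' = rng n e" "(e,e') \<in> \<omega> (n, rng n e)" "e' \<noteq> e"
  using assms unfolding is_succ_edge_def in_edges_def by auto

lemma succ_not_min:
  assumes "1 \<le> n" "e \<in> E n" "is_succ_edge E rng \<omega> n e e'"
  shows "\<not> is_min_edge E rng \<omega> n e'"
proof
  assume mn: "is_min_edge E rng \<omega> n e'"
  note sp = succ_props[OF assms(3)]
  have "(e', e) \<in> \<omega> (n, rng n e)" using mn sp assms(2) unfolding is_min_edge_def
    by (metis in_edgesI)
  then show False using sp lin_antisym[OF linE[OF assms(1,2)]] by blast
qed

lemma succ_conv:
  assumes "1 \<le> n" "e \<in> E n" "is_succ_edge E rng \<omega> n e e'"
  shows "is_succ_edge E rng (\<lambda>p. (\<omega> p)\<inverse>) n e' e"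
proof -
  note sp = succ_props[OF assms(3)]
  have L: "linear_order_on (in_edges E rng n (rng n e)) (\<omega> (n, rng n e))" using linE[OF assms(1,2)] .
  have eA: "e \<in> in_edges E rng n (rng n e)" using assms(2) by (rule in_edgesI)
  have "\<forall>f\<in>in_edges E rng n (rng n e). (f, e') \<in> \<omega> (n, rng n e) \<and> f \<noteq> e' \<longrightarrow> (f, e) \<in> \<omega> (n, rng n e)"
  proof (intro ballI impI)
    fix f assume f: "f \<in> in_edges E rng n (rng n e)" "(f, e') \<in> \<omega> (n, rng n e) \<and> f \<noteq> e'"
    show "(f, e) \<in> \<omega> (n, rng n e)"
    proof (rule ccontr)
      assume nf: "(f, e) \<notin> \<omega> (n, rng n e)"
      then have "(e,f) \<in> \<omega> (n, rng n e)" using lin_total[OF L eA f(1)] by blast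
      moreover have "f \<noteq> e" using nf L eA
        by (auto simp: linear_order_on_def partial_order_on_def preorder_on_def refl_on_def)
      ultimately have "(e',f) \<in> \<omega> (n, rng n e)" using assms(3) f(1) unfolding is_succ_edge_def by blast
      then show False using f(2) lin_antisym[OF L] by blast
    qed
  qed
  then show ?thesis unfolding is_succ_edge_def using sp eA by (simp add: in_edges_def)
qed

end


lemma paths_fpm: "x \<in> paths E src rng v0 \<Longrightarrow> fpm E src rng v0 m x (rng m (x (m - 1)))"
  unfolding fpm_def using pathsD[of x E src rng v0] by auto

locale goodord = ordl V E src rng v0 \<omega>
  for V :: "nat \<Rightarrow> 'v set" and E :: "nat \<Rightarrow> 'e set" and src rng :: "nat \<Rightarrow> 'e \<Rightarrow> 'v"
    and v0 :: 'v and \<omega> :: "nat \<times> 'v \<Rightarrow> 'e rel" +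
  fixes N :: nat and a b :: "nat \<Rightarrow> 'v"
  assumes N1: "1 \<le> N"
    and ab: "\<And>m. N \<le> m \<Longrightarrow> a m \<in> V m \<and> b m \<in> V m"
    and maxsrc: "\<And>n e. N < n \<Longrightarrow> e \<in> E n \<Longrightarrow> is_max_edge E rng \<omega> n e \<Longrightarrow> src n e = a (n - 1)"
    and minsrc: "\<And>n e. N < n \<Longrightarrow> e \<in> E n \<Longrightarrow> is_min_edge E rng \<omega> n e \<Longrightarrow> src n e = b (n - 1)"
begin

lemma conv: "goodord V E src rng v0 (\<lambda>p. (\<omega> p)\<inverse>) N b a"
  apply (intro goodord.intro ordl.intro goodord_axioms.intro)
  apply (simp_all add: br lin N1 ab)
  using maxsrc minsrc N1 by auto

lemma mine_src: "N < n \<Longrightarrow> v \<in> V n \<Longrightarrow> src n (mine n v) = b (n - 1)"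
  using mine[of n v] minsrc[of n "mine n v"] N1 by (auto simp: in_edges_def)

lemma minpath_step:
  assumes "N < Suc m" "u \<in> V (Suc m)" "i < m"
  shows "minpath (Suc m) u i = minpath m (b m) i"
  using mine_src[OF assms(1,2)] assms(3) by (simp add: minpath.simps(2))

lemma minpath_mono:
  assumes "N \<le> m" "i < m" "m \<le> m'"
  shows "minpath m' (b m') i = minpath m (b m) i"
  using assms(3)
proof (induction m' rule: dec_induct)
  case base
  then show ?case by simp
next
  case (step k)
  have "minpath (Suc k) (b (Suc k)) i = minpath k (b k) i"
    using minpath_step[of k "b (Suc k)" i] ab[of "Suc k"] assms step by simp
  then show ?case using step by simp
qed

definition xmin where "xmin i = minpath (i + N + 1) (b (i + N + 1)) i"

lemma minpath_xmin_b: "N \<le> m \<Longrightarrow> i < m \<Longrightarrow> minpath m (b m) i = xmin i"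
  unfolding xmin_def
  using minpath_mono[of m i "max m (i+N+1)"] minpath_mono[of "i+N+1" i "max m (i+N+1)"] by simp

lemma minpath_xmin:
  assumes "N < m" "u \<in> V m" "i + 1 < m"
  shows "minpath m u i = xmin i"
proof -
  obtain m' where m: "m = Suc m'" using assms(1) by (cases m) auto
  show ?thesis using minpath_step[of m' u i] minpath_xmin_b[of m' i] assms m by simp
qed

lemma xmin_path: "xmin \<in> paths E src rng v0 \<and> (\<forall>i. is_min_edge E rng \<omega> (Suc i) (xmin i))"
proof -
  have X: "xmin i = minpath (i+N+2) (b (i+N+2)) i" "xmin (Suc i) = minpath (i+N+2) (b (i+N+2)) (Suc i)" for i
    using minpath_xmin_b[of "i+N+2" i] minpath_xmin_b[of "i+N+2" "Suc i"] by auto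
  have P: "fpm E src rng v0 (i+N+2) (minpath (i+N+2) (b (i+N+2))) (b (i+N+2)) \<and>
     (\<forall>j<i+N+2. is_min_edge E rng \<omega> (Suc j) (minpath (i+N+2) (b (i+N+2)) j))" for i
    by (rule minpath_props) (use ab[of "i+N+2"] in simp)
  have A: "xmin i \<in> E (Suc i)" for i using P[of i] X[of i] unfolding fpm_def by auto
  have B: "rng (Suc i) (xmin i) = src (Suc (Suc i)) (xmin (Suc i))" for i
    using P[of i] X[of i] unfolding fpm_def by auto
  have C: "src 1 (xmin 0) = v0" using P[of 0] X[of 0] unfolding fpm_def by auto
  have D: "is_min_edge E rng \<omega> (Suc i) (xmin i)" for i using P[of i] X[of i] by auto
  show ?thesis using A B C D unfolding paths_def by auto
qed

lemma xmin_unique: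
  assumes "x \<in> paths E src rng v0" "\<forall>i. is_min_edge E rng \<omega> (Suc i) (x i)"
  shows "x = xmin"
proof
  fix i
  define m where "m = i + N + 2"
  define u where "u = rng m (x (m - 1))"
  have u: "u \<in> V m" using paths_vert(1)[OF br assms(1), of "i+N+1"] by (simp add: u_def m_def)
  have m1: "N < m" "i + 1 < m" unfolding m_def by simp_all
  have fp: "fpm E src rng v0 m x u" using paths_fpm[OF assms(1), of m] by (simp add: u_def)
  have "\<forall>j<m. x j = minpath m u j"
    using minpath_unique[OF fp _ u] assms(2) by blast
  then have "x i = minpath m u i" by (simp add: m_def)
  also have "\<dots> = xmin i" using minpath_xmin[OF m1(1) u m1(2)] .
  finally show "x i = xmin i" .
qed

lemma min_paths_eq: "min_paths E src rng v0 \<omega> = {xmin}"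
  using xmin_path xmin_unique unfolding min_paths_def by auto

definition kk where "kk x = (LEAST i. \<not> is_max_edge E rng \<omega> (Suc i) (x i))"

definition sc where "sc n e = (THE e'. is_succ_edge E rng \<omega> n e e')"

definition phi where
  "phi x = (if (\<forall>i. is_max_edge E rng \<omega> (Suc i) (x i)) then xmin else
     (\<lambda>i. if i < kk x then minpath (kk x) (src (Suc (kk x)) (sc (Suc (kk x)) (x (kk x)))) i
          else if i = kk x then sc (Suc (kk x)) (x (kk x)) else x i))"

lemma test_const: "goodord.phi E src rng \<omega> N b = phi" by (rule refl)

lemma sc:
  assumes "e \<in> E (Suc k)" "\<not> is_max_edge E rng \<omega> (Suc k) e"
  shows "is_succ_edge E rng \<omega> (Suc k) e (sc (Suc k) e)"
proof -
  have "\<exists>!e'. is_succ_edge E rng \<omega> (Suc k) e e'"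
    using succ_ex[of "Suc k" e] succ_unique[of "Suc k" e] assms by auto
  then show ?thesis unfolding sc_def by (rule theI')
qed

lemma sc_eq:
  assumes "e \<in> E (Suc k)" "is_succ_edge E rng \<omega> (Suc k) e e'"
  shows "sc (Suc k) e = e'"
proof -
  have "\<not> is_max_edge E rng \<omega> (Suc k) e"
  proof
    assume mx: "is_max_edge E rng \<omega> (Suc k) e"
    note sp = succ_props[OF assms(2)]
    have "(e', e) \<in> \<omega> (Suc k, rng (Suc k) e)" using mx sp unfolding is_max_edge_def in_edges_def by auto
    then show False using sp lin_antisym[OF linE[of "Suc k" e]] assms(1) by auto
  qed
  then show ?thesis using sc[OF assms(1)] succ_unique[of "Suc k" e] assms by auto
qed

lemma kk:
  assumes "\<not> (\<forall>i. is_max_edge E rng \<omega> (Suc i) (x i))"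
  shows "\<not> is_max_edge E rng \<omega> (Suc (kk x)) (x (kk x))" "\<And>i. i < kk x \<Longrightarrow> is_max_edge E rng \<omega> (Suc i) (x i)"
proof -
  obtain j where "\<not> is_max_edge E rng \<omega> (Suc j) (x j)" using assms by blast
  then show "\<not> is_max_edge E rng \<omega> (Suc (kk x)) (x (kk x))" unfolding kk_def by (rule LeastI)
  show "\<And>i. i < kk x \<Longrightarrow> is_max_edge E rng \<omega> (Suc i) (x i)" unfolding kk_def using not_less_Least by blast
qed

lemma kk_eq:
  assumes "\<And>i. i < k \<Longrightarrow> is_max_edge E rng \<omega> (Suc i) (x i)" "\<not> is_max_edge E rng \<omega> (Suc k) (x k)"
  shows "kk x = k"
  unfolding kk_def using assms by (intro Least_equality) (auto simp: not_less[symmetric])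

lemma phi_nm:
  assumes "\<not> (\<forall>i. is_max_edge E rng \<omega> (Suc i) (x i))"
  shows "phi x = (\<lambda>i. if i < kk x then minpath (kk x) (src (Suc (kk x)) (sc (Suc (kk x)) (x (kk x)))) i
          else if i = kk x then sc (Suc (kk x)) (x (kk x)) else x i)"
  unfolding phi_def by (rule if_not_P[OF assms])

lemma phi_nm_props:
  assumes x: "x \<in> paths E src rng v0" and nm: "\<not> (\<forall>i. is_max_edge E rng \<omega> (Suc i) (x i))"
  shows "phi x \<in> paths E src rng v0"
    "is_succ_edge E rng \<omega> (Suc (kk x)) (x (kk x)) (phi x (kk x))"
    "\<forall>i>kk x. phi x i = x i" "\<forall>i<kk x. is_min_edge E rng \<omega> (Suc i) (phi x i)"
proof -
  define k where "k = kk x"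
  define s where "s = sc (Suc k) (x k)"
  define u where "u = src (Suc k) s"
  have xk: "x k \<in> E (Suc k)" using pathsD(1)[OF x] .
  have ss: "is_succ_edge E rng \<omega> (Suc k) (x k) s" unfolding s_def using sc[OF xk] kk(1)[OF nm] by (simp add: k_def)
  note sp = succ_props[OF ss]
  have u: "u \<in> V k" using edge_vertS[OF sp(1)] by (simp add: u_def)
  note mp = minpath_props[OF u]
  have y: "phi x = (\<lambda>i. if i < k then minpath k u i else if i = k then s else x i)"
    unfolding k_def s_def u_def by (rule phi_nm[OF nm])
  show "is_succ_edge E rng \<omega> (Suc (kk x)) (x (kk x)) (phi x (kk x))" using ss y by (simp add: k_def)
  show "\<forall>i>kk x. phi x i = x i" using y by (simp add: k_def)
  show "\<forall>i<kk x. is_min_edge E rng \<omega> (Suc i) (phi x i)" using y mp by (simp add: k_def)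
  have A: "phi x i \<in> E (Suc i)" for i
    using y mp sp(1) pathsD(1)[OF x, of i] unfolding fpm_def by auto
  have B: "src 1 (phi x 0) = v0"
  proof (cases "k = 0")
    case True
    then show ?thesis using y u V0 by (simp add: u_def)
  next
    case False
    then show ?thesis using y mp unfolding fpm_def by simp
  qed
  have C: "rng (Suc i) (phi x i) = src (Suc (Suc i)) (phi x (Suc i))" for i
  proof -
    consider "Suc i < k" | "Suc i = k" | "i = k" | "k < i" by linarith
    then show ?thesis
    proof cases
      case 1 then show ?thesis using y mp unfolding fpm_def by auto
    next
      case 2
      then have "rng k (minpath k u (k - 1)) = u" using mp unfolding fpm_def by auto
      then show ?thesis using y 2 by (auto simp: u_def)
    next
      case 3 then show ?thesis using y sp pathsD(3)[OF x, of k] by auto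
    next
      case 4 then show ?thesis using y pathsD(3)[OF x, of i] by auto
    qed
  qed
  show "phi x \<in> paths E src rng v0" using A B C unfolding paths_def by auto
qed

lemma phi_paths: assumes x: "x \<in> paths E src rng v0" shows "phi x \<in> paths E src rng v0"
proof (cases "\<forall>i. is_max_edge E rng \<omega> (Suc i) (x i)")
  case True then show ?thesis using xmin_path unfolding phi_def if_P[OF True] by simp
next
  case False then show ?thesis using phi_nm_props(1)[OF x False] by simp
qed

lemma phi_loc:
  assumes x: "x \<in> paths E src rng v0"
  shows "\<exists>M. \<forall>y\<in>paths E src rng v0. (\<forall>j<M. y j = x j) \<longrightarrow> phi y i = phi x i"
proof (cases "\<forall>i. is_max_edge E rng \<omega> (Suc i) (x i)")
  case True
  show ?thesis
  proof (intro exI[of _ "i + N + 3"] ballI impI)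
    fix y assume y: "y \<in> paths E src rng v0" "\<forall>j<i+N+3. y j = x j"
    show "phi y i = phi x i"
    proof (cases "\<forall>i. is_max_edge E rng \<omega> (Suc i) (y i)")
      case True
      then show ?thesis using \<open>\<forall>i. is_max_edge E rng \<omega> (Suc i) (x i)\<close> unfolding phi_def by simp
    next
      case False
      define k where "k = kk y"
      have nk: "\<not> is_max_edge E rng \<omega> (Suc k) (y k)" using kk(1)[OF False] by (simp add: k_def)
      have kM: "i + N + 3 \<le> k"
      proof (rule ccontr)
        assume "\<not> i + N + 3 \<le> k"
        then have "y k = x k" using y(2) by simp
        then show False using nk True by simp
      qed
      define s where "s = sc (Suc k) (y k)"
      define u where "u = src (Suc k) s"
      have yk: "y k \<in> E (Suc k)" using pathsD(1)[OF y(1)] .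
      have ss: "is_succ_edge E rng \<omega> (Suc k) (y k) s" unfolding s_def using sc[OF yk nk] .
      have u: "u \<in> V k" using edge_vertS[OF succ_props(1)[OF ss]] by (simp add: u_def)
      have "phi y i = minpath k u i" using phi_nm[OF False] kM by (simp add: k_def s_def u_def)
      also have "\<dots> = xmin i" using minpath_xmin[OF _ u] kM by simp
      finally show ?thesis using True unfolding phi_def by simp
    qed
  qed
next
  case False
  define k where "k = kk x"
  show ?thesis
  proof (intro exI[of _ "Suc (max k i)"] ballI impI)
    fix y assume y: "y \<in> paths E src rng v0" "\<forall>j<Suc (max k i). y j = x j"
    have yx: "j \<le> k \<Longrightarrow> y j = x j" for j using y(2) by auto
    have ky: "kk y = k"
      using kk[OF False] yx by (intro kk_eq) (auto simp: k_def)
    have "\<not> is_max_edge E rng \<omega> (Suc k) (y k)" using kk(1)[OF False] yx[of k] by (simp add: k_def)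
    then have nmy: "\<not> (\<forall>i. is_max_edge E rng \<omega> (Suc i) (y i))" by blast
    show "phi y i = phi x i"
      unfolding phi_nm[OF nmy] phi_nm[OF False] ky k_def[symmetric] using yx[of k] y(2) by auto
  qed
qed

lemma max_paths_conv: "max_paths E src rng v0 \<omega> = min_paths E src rng v0 (\<lambda>p. (\<omega> p)\<inverse>)"
  unfolding max_paths_def min_paths_def by simp

lemma phi_inv:
  assumes x: "x \<in> paths E src rng v0"
  shows "goodord.phi E src rng (\<lambda>p. (\<omega> p)\<inverse>) N a (phi x) = x"
proof -
  interpret c: goodord V E src rng v0 "\<lambda>p. (\<omega> p)\<inverse>" N b a by (rule conv)
  show ?thesis
  proof (cases "\<forall>i. is_max_edge E rng \<omega> (Suc i) (x i)")
    case True
    then have px: "phi x = xmin" unfolding phi_def by simp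
    have "c.phi xmin = c.xmin" using xmin_path unfolding c.phi_def by simp
    moreover have "x = c.xmin" using c.xmin_unique[OF x] True by simp
    ultimately show ?thesis using px by simp
  next
    case False
    define k where "k = kk x"
    define y where "y = phi x"
    note P = phi_nm_props[OF x False]
    have yP: "y \<in> paths E src rng v0" using P(1) by (simp add: y_def)
    have xk: "x k \<in> E (Suc k)" using pathsD(1)[OF x] .
    have ss: "is_succ_edge E rng \<omega> (Suc k) (x k) (y k)" using P(2) by (simp add: k_def y_def)
    have yk: "y k \<in> E (Suc k)" using succ_props(1)[OF ss] .
    have ynm: "\<not> is_min_edge E rng \<omega> (Suc k) (y k)" using succ_not_min[OF _ xk ss] by simp
    have ymin: "\<And>i. i < k \<Longrightarrow> is_min_edge E rng \<omega> (Suc i) (y i)" using P(4) by (simp add: k_def y_def)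
    have cnm: "\<not> (\<forall>i. is_max_edge E rng (\<lambda>p. (\<omega> p)\<inverse>) (Suc i) (y i))" using ynm by auto
    have ck: "c.kk y = k" using ymin ynm by (intro c.kk_eq) auto
    have csc: "c.sc (Suc k) (y k) = x k" using c.sc_eq[OF yk succ_conv[OF _ xk ss]] by simp
    have xmax: "\<And>i. i < k \<Longrightarrow> is_max_edge E rng \<omega> (Suc i) (x i)" using kk(2)[OF False] by (simp add: k_def)
    have srcV: "src (Suc k) (x k) \<in> V k" using edge_vertS[OF xk] by simp
    have fp: "fpm E src rng v0 k x (src (Suc k) (x k))"
    proof (cases k)
      case 0 then show ?thesis by (simp add: fpm_def)
    next
      case (Suc k')
      then show ?thesis using paths_fpm[OF x, of k] pathsD(3)[OF x, of k'] by simp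
    qed
    have cm: "\<forall>i<k. x i = c.minpath k (src (Suc k) (x k)) i"
      using c.minpath_unique[OF fp _ srcV] xmax by simp
    have yrest: "\<And>i. k < i \<Longrightarrow> y i = x i" using P(3) by (simp add: k_def y_def)
    show ?thesis
      unfolding y_def[symmetric] c.phi_nm[OF cnm] ck csc
      using cm yrest by (auto intro!: ext)
  qed
qed

lemma phi_max: "phi ` max_paths E src rng v0 \<omega> = min_paths E src rng v0 \<omega>"
proof -
  interpret c: goodord V E src rng v0 "\<lambda>p. (\<omega> p)\<inverse>" N b a by (rule conv)
  have "max_paths E src rng v0 \<omega> = {c.xmin}" using c.min_paths_eq max_paths_conv by simp
  moreover have "phi c.xmin = xmin" using c.xmin_path unfolding phi_def by simp
  ultimately show ?thesis using min_paths_eq by simp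
qed

lemma vershik: "vershik_map E src rng v0 \<omega> phi"
proof -
  interpret c: goodord V E src rng v0 "\<lambda>p. (\<omega> p)\<inverse>" N b a by (rule conv)
  have cc: "(\<lambda>p. ((\<omega> p)\<inverse>)\<inverse>) = \<omega>" by simp
  have inv2: "phi (c.phi y) = y" if "y \<in> paths E src rng v0" for y
    using c.phi_inv[OF that] unfolding cc .
  have hm: "homeomorphic_maps (path_top E src rng v0) (path_top E src rng v0) phi c.phi"
    unfolding homeomorphic_maps_def
    using cont_from_loc[of E src rng v0 phi, OF phi_paths phi_loc]
      cont_from_loc[of E src rng v0 c.phi, OF c.phi_paths c.phi_loc] phi_inv inv2
    by simp
  have nm: "\<forall>x\<in>paths E src rng v0 - max_paths E src rng v0 \<omega>.
        let k = (LEAST i. \<not> is_max_edge E rng \<omega> (Suc i) (x i)) in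
          is_succ_edge E rng \<omega> (Suc k) (x k) (phi x k) \<and>
          (\<forall>i>k. phi x i = x i) \<and>
          (\<forall>i<k. is_min_edge E rng \<omega> (Suc i) (phi x i))"
  proof
    fix x assume "x \<in> paths E src rng v0 - max_paths E src rng v0 \<omega>"
    then have x: "x \<in> paths E src rng v0" "\<not> (\<forall>i. is_max_edge E rng \<omega> (Suc i) (x i))"
      unfolding max_paths_def by auto
    show "let k = (LEAST i. \<not> is_max_edge E rng \<omega> (Suc i) (x i)) in
          is_succ_edge E rng \<omega> (Suc k) (x k) (phi x k) \<and>
          (\<forall>i>k. phi x i = x i) \<and>
          (\<forall>i<k. is_min_edge E rng \<omega> (Suc i) (phi x i))"
      using phi_nm_props[OF x] unfolding Let_def kk_def by simp
  qed
  show ?thesis unfolding vershik_map_def homeomorphic_map_maps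
    using hm phi_max nm by blast
qed

end


section \<open>Non-perfect orderings\<close>

lemma nonperf:
  assumes ol: "ordl V E src rng v0 \<omega>"
    and N1: "1 \<le> N"
    and pq: "\<And>m. N \<le> m \<Longrightarrow> p m \<in> V m \<and> q m \<in> V m \<and> p m \<noteq> q m"
    and A1: "\<And>n e. N < n \<Longrightarrow> e \<in> E n \<Longrightarrow> rng n e = p n \<Longrightarrow> is_max_edge E rng \<omega> n e \<Longrightarrow> src n e = p (n - 1)"
    and A2: "\<And>n e. N < n \<Longrightarrow> e \<in> E n \<Longrightarrow> rng n e = p n \<Longrightarrow> is_min_edge E rng \<omega> n e \<Longrightarrow> src n e = q (n - 1)"
    and A3: "\<And>n. N < n \<Longrightarrow> \<exists>e1 e2. e1 \<in> in_edges E rng n (q n) \<and> e2 \<in> in_edges E rng n (q n) \<and>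
        src n e1 = p (n - 1) \<and> src n e2 = q (n - 1) \<and> e1 \<noteq> e2 \<and>
        (\<forall>f\<in>in_edges E rng n (q n). (e1,f) \<in> \<omega> (n, q n)) \<and>
        (\<forall>f\<in>in_edges E rng n (q n). f \<noteq> e1 \<longrightarrow> (e2,f) \<in> \<omega> (n, q n))"
    and EQ: "\<And>n. N < n \<Longrightarrow> \<exists>e\<in>E n. src n e = q (n - 1) \<and> rng n e = q n"
  shows "\<not> vershik_map E src rng v0 \<omega> \<phi>"
proof
  assume vm: "vershik_map E src rng v0 \<omega> \<phi>"
  interpret o: ordl V E src rng v0 \<omega> by (rule ol)
  interpret c: ordl V E src rng v0 "\<lambda>p. (\<omega> p)\<inverse>"
    by (intro ordl.intro) (simp_all add: o.br o.lin)
  have hm: "homeomorphic_map (path_top E src rng v0) (path_top E src rng v0) \<phi>"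
    using vm unfolding vershik_map_def by blast
  have cm: "continuous_map (path_top E src rng v0) (path_top E src rng v0) \<phi>"
    using homeomorphic_imp_continuous_map[OF hm] .
  have phiP: "\<phi> y \<in> paths E src rng v0" if "y \<in> paths E src rng v0" for y
    using continuous_map_image_subset_topspace[OF cm] that by auto
  have vnm: "\<And>x. x \<in> paths E src rng v0 - max_paths E src rng v0 \<omega> \<Longrightarrow>
        is_succ_edge E rng \<omega> (Suc (LEAST i. \<not> is_max_edge E rng \<omega> (Suc i) (x i)))
           (x (LEAST i. \<not> is_max_edge E rng \<omega> (Suc i) (x i)))
           (\<phi> x (LEAST i. \<not> is_max_edge E rng \<omega> (Suc i) (x i))) \<and>
        (\<forall>i<(LEAST i. \<not> is_max_edge E rng \<omega> (Suc i) (x i)). is_min_edge E rng \<omega> (Suc i) (\<phi> x i))"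
    using vm unfolding vershik_map_def Let_def by blast
  \<comment> \<open>the maximal path through the p-vertices\<close>
  define xp where "xp i = (if i < N then c.minpath N (p N) i else c.mine (Suc i) (p (Suc i)))" for i
  have pN: "p N \<in> V N" using pq by simp
  note cmp = c.minpath_props[OF pN]
  have me: "c.mine (Suc i) (p (Suc i)) \<in> in_edges E rng (Suc i) (p (Suc i)) \<and>
      is_max_edge E rng \<omega> (Suc i) (c.mine (Suc i) (p (Suc i)))" if "N \<le> i" for i
    using c.mine[of "Suc i" "p (Suc i)"] pq[of "Suc i"] that by simp
  have meE: "c.mine (Suc i) (p (Suc i)) \<in> E (Suc i)" "rng (Suc i) (c.mine (Suc i) (p (Suc i))) = p (Suc i)"
    "src (Suc i) (c.mine (Suc i) (p (Suc i))) = p i" if "N \<le> i" for i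
  proof -
    show 1: "c.mine (Suc i) (p (Suc i)) \<in> E (Suc i)" "rng (Suc i) (c.mine (Suc i) (p (Suc i))) = p (Suc i)"
      using me[OF that] by (auto simp: in_edges_def)
    show "src (Suc i) (c.mine (Suc i) (p (Suc i))) = p i"
      using A1[of "Suc i", OF _ 1] me[OF that] that by simp
  qed
  have xpmax: "is_max_edge E rng \<omega> (Suc i) (xp i)" for i
    using cmp me unfolding xp_def by (cases "i < N") auto
  have xpP: "xp \<in> paths E src rng v0"
  proof -
    have A: "xp i \<in> E (Suc i)" for i using cmp meE unfolding xp_def fpm_def by (cases "i < N") auto
    have B: "src 1 (xp 0) = v0" using cmp N1 unfolding xp_def fpm_def by auto
    have C: "rng (Suc i) (xp i) = src (Suc (Suc i)) (xp (Suc i))" for i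
    proof -
      consider "Suc i < N" | "Suc i = N" | "N \<le> i" by linarith
      then show ?thesis
      proof cases
        case 1 then show ?thesis using cmp unfolding xp_def fpm_def by auto
      next
        case 2
        then have "rng N (c.minpath N (p N) (N - 1)) = p N" using cmp unfolding fpm_def by auto
        then show ?thesis using 2 meE(3)[of N] unfolding xp_def by auto
      next
        case 3 then show ?thesis using meE[of i] meE[of "Suc i"] unfolding xp_def by auto
      qed
    qed
    show ?thesis using A B C unfolding paths_def by auto
  qed
  obtain M where M: "\<forall>y\<in>paths E src rng v0. (\<forall>j<M. y j = xp j) \<longrightarrow> \<phi> y N = \<phi> xp N"
    using loc_from_cont[OF cm xpP] by blast
  have key: "src (Suc N) (\<phi> xp N) = (if even (k - N) then q N else p N)" if k: "N < k" "M \<le> k" for k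
  proof -
    obtain e1 e2 where e: "e1 \<in> in_edges E rng (Suc k) (q (Suc k))" "e2 \<in> in_edges E rng (Suc k) (q (Suc k))"
        "src (Suc k) e1 = p k" "src (Suc k) e2 = q k" "e1 \<noteq> e2"
        "\<forall>f\<in>in_edges E rng (Suc k) (q (Suc k)). (e1,f) \<in> \<omega> (Suc k, q (Suc k))"
        "\<forall>f\<in>in_edges E rng (Suc k) (q (Suc k)). f \<noteq> e1 \<longrightarrow> (e2,f) \<in> \<omega> (Suc k, q (Suc k))"
      using A3[of "Suc k"] k by auto
    have e1E: "e1 \<in> E (Suc k)" "rng (Suc k) e1 = q (Suc k)" using e(1) by (auto simp: in_edges_def)
    define t where "t i = (SOME e. e \<in> E (Suc i) \<and> src (Suc i) e = q i \<and> rng (Suc i) e = q (Suc i))" for i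
    have tP: "t i \<in> E (Suc i) \<and> src (Suc i) (t i) = q i \<and> rng (Suc i) (t i) = q (Suc i)" if "N \<le> i" for i
    proof -
      have "\<exists>e. e \<in> E (Suc i) \<and> src (Suc i) e = q i \<and> rng (Suc i) e = q (Suc i)"
        using EQ[of "Suc i"] that by auto
      then show ?thesis unfolding t_def by (rule someI_ex)
    qed
    define y where "y i = (if i < k then xp i else if i = k then e1 else t i)" for i
    have yP: "y \<in> paths E src rng v0"
    proof -
      have A: "y i \<in> E (Suc i)" for i using pathsD(1)[OF xpP] e1E tP[of i] k unfolding y_def by auto
      have B: "src 1 (y 0) = v0" using pathsD(2)[OF xpP] k unfolding y_def by auto
      have C: "rng (Suc i) (y i) = src (Suc (Suc i)) (y (Suc i))" for i
      proof -
        consider "Suc i < k" | "Suc i = k" | "i = k" | "k < i" by linarith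
        then show ?thesis
        proof cases
          case 1 then show ?thesis using pathsD(3)[OF xpP, of i] unfolding y_def by auto
        next
          case 2
          have "xp i = c.mine (Suc i) (p (Suc i))" using 2 k unfolding xp_def by auto
          then show ?thesis using 2 meE(2)[of i] e(3) k unfolding y_def by auto
        next
          case 3 then show ?thesis using e1E tP[of "Suc k"] k unfolding y_def by auto
        next
          case 4 then show ?thesis using tP[of i] tP[of "Suc i"] k unfolding y_def by auto
        qed
      qed
      show ?thesis using A B C unfolding paths_def by auto
    qed
    have L: "linear_order_on (in_edges E rng (Suc k) (q (Suc k))) (\<omega> (Suc k, q (Suc k)))"
      using o.lin[of "Suc k" "q (Suc k)"] pq[of "Suc k"] k by simp
    have e1nm: "\<not> is_max_edge E rng \<omega> (Suc k) e1"
    proof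
      assume "is_max_edge E rng \<omega> (Suc k) e1"
      then have "(e2, e1) \<in> \<omega> (Suc k, q (Suc k))" using e(2) e1E unfolding is_max_edge_def by auto
      moreover have "(e1, e2) \<in> \<omega> (Suc k, q (Suc k))" using e(6) e(2) by blast
      ultimately show False using lin_antisym[OF L] e(5) by blast
    qed
    have least: "(LEAST i. \<not> is_max_edge E rng \<omega> (Suc i) (y i)) = k"
      using e1nm xpmax unfolding y_def by (intro Least_equality) (auto simp: not_less[symmetric])
    have ynm: "y \<in> paths E src rng v0 - max_paths E src rng v0 \<omega>"
      using yP e1nm unfolding max_paths_def y_def by auto
    note V = vnm[OF ynm, unfolded least]
    have s12: "is_succ_edge E rng \<omega> (Suc k) e1 e2"
      unfolding is_succ_edge_def using e e1E by auto
    have phik: "\<phi> y k = e2"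
      using o.succ_unique[of "Suc k" e1 "\<phi> y k" e2] V s12 e1E unfolding y_def by auto
    define W where "W j = src (Suc j) (\<phi> y j)" for j
    have Wk: "W k = q k" using phik e(4) by (simp add: W_def)
    have stepP: "W j = q j" if j: "N \<le> j" "j < k" "W (Suc j) = p (Suc j)" for j
    proof -
      have pyj: "\<phi> y j \<in> E (Suc j)" using pathsD(1)[OF phiP[OF yP]] .
      have mn: "is_min_edge E rng \<omega> (Suc j) (\<phi> y j)" using V j by auto
      have rj: "rng (Suc j) (\<phi> y j) = W (Suc j)" using pathsD(3)[OF phiP[OF yP], of j] by (simp add: W_def)
      show ?thesis using A2[of "Suc j" "\<phi> y j"] pyj mn rj j by (simp add: W_def)
    qed
    have stepQ: "W j = p j" if j: "N \<le> j" "j < k" "W (Suc j) = q (Suc j)" for j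
    proof -
      have pyj: "\<phi> y j \<in> E (Suc j)" using pathsD(1)[OF phiP[OF yP]] .
      have mn: "is_min_edge E rng \<omega> (Suc j) (\<phi> y j)" using V j by auto
      have rj: "rng (Suc j) (\<phi> y j) = q (Suc j)" using pathsD(3)[OF phiP[OF yP], of j] j(3) by (simp add: W_def)
      obtain f1 where f1: "f1 \<in> in_edges E rng (Suc j) (q (Suc j))" "src (Suc j) f1 = p j"
        "\<forall>f\<in>in_edges E rng (Suc j) (q (Suc j)). (f1,f) \<in> \<omega> (Suc j, q (Suc j))"
        using A3[of "Suc j"] j by auto
      have pin: "\<phi> y j \<in> in_edges E rng (Suc j) (q (Suc j))" using pyj rj by (simp add: in_edges_def)
      have Lj: "linear_order_on (in_edges E rng (Suc j) (q (Suc j))) (\<omega> (Suc j, q (Suc j)))"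
        using o.lin[of "Suc j" "q (Suc j)"] pq[of "Suc j"] j by simp
      have "(\<phi> y j, f1) \<in> \<omega> (Suc j, q (Suc j))" using mn f1(1) rj unfolding is_min_edge_def by auto
      moreover have "(f1, \<phi> y j) \<in> \<omega> (Suc j, q (Suc j))" using f1(3) pin by blast
      ultimately have "\<phi> y j = f1" using lin_antisym[OF Lj] by blast
      then show ?thesis using f1(2) by (simp add: W_def)
    qed
    have alt: "W (k - t) = (if even t then q (k - t) else p (k - t))" if "t \<le> k - N" for t
      using that
    proof (induction t)
      case 0
      then show ?case using Wk by simp
    next
      case (Suc t)
      define j where "j = k - Suc t"
      have j: "N \<le> j" "j < k" "Suc j = k - t" using Suc.prems k unfolding j_def by auto
      have IH: "W (Suc j) = (if even t then q (Suc j) else p (Suc j))" using Suc j by simp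
      show ?case
      proof (cases "even t")
        case True
        then show ?thesis using stepQ[OF j(1,2)] IH by (simp add: j_def[symmetric])
      next
        case False
        then show ?thesis using stepP[OF j(1,2)] IH by (simp add: j_def[symmetric])
      qed
    qed
    have WN: "W N = (if even (k - N) then q N else p N)" using alt[of "k - N"] k by simp
    have "\<forall>j<M. y j = xp j" using k unfolding y_def by auto
    then have "\<phi> y N = \<phi> xp N" using M yP by blast
    then show ?thesis using WN by (simp add: W_def)
  qed
  have "src (Suc N) (\<phi> xp N) = (if even (M + N + 1 - N) then q N else p N)" by (rule key) auto
  moreover have "src (Suc N) (\<phi> xp N) = (if even (M + N + 2 - N) then q N else p N)" by (rule key) auto
  ultimately show False using pq[of N] by (cases "even (M + 1)") auto
qed


lemma rank_two:
  assumes "has_rank V d" "2 \<le> d"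
  shows "\<exists>N0. \<forall>n\<ge>N0. \<exists>x y. x \<in> V n \<and> y \<in> V n \<and> x \<noteq> y"
proof -
  have dd: "d = (LEAST k. infinite {n. card (V n) = k})" using assms(1) by (simp add: has_rank_def)
  have f0: "finite {n. card (V n) = 0}" using not_less_Least[of 0 "\<lambda>k. infinite {n. card (V n) = k}"] assms(2) dd by auto
  have f1: "finite {n. card (V n) = 1}" using not_less_Least[of 1 "\<lambda>k. infinite {n. card (V n) = k}"] assms(2) dd by auto
  have "{n. card (V n) < 2} \<subseteq> {n. card (V n) = 0} \<union> {n. card (V n) = 1}" by auto
  then have "finite {n. card (V n) < 2}" using f0 f1 finite_subset by blast
  then obtain m where m: "\<forall>n\<in>{n. card (V n) < 2}. n < m" unfolding finite_nat_set_iff_bounded by blast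
  have "\<exists>x y. x \<in> V n \<and> y \<in> V n \<and> x \<noteq> y" if "m \<le> n" for n
  proof -
    have c: "2 \<le> card (V n)" using m that by (meson mem_Collect_eq not_le not_less)
    then have fin: "finite (V n)" by (metis card.infinite not_numeral_le_zero)
    have "\<not> card (V n) \<le> Suc 0" using c by simp
    then show ?thesis using card_le_Suc0_iff_eq[OF fin] by blast
  qed
  then show ?thesis by blast
qed

theorem mainTheorem2:
  fixes V :: "nat \<Rightarrow> 'v set" and E :: "nat \<Rightarrow> 'e set"
    and src rng :: "nat \<Rightarrow> 'e \<Rightarrow> 'v" and v0 :: 'v and d :: nat
  assumes "bratteli V E src rng v0"
    and "aperiodic E src rng v0"
    and "cantor_paths E src rng v0"
    and "\<not> decomposable V E src rng"
    and "simple_bratteli V E src rng"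
    and "has_rank V d" and "d \<ge> 2"
    and "positive_incidence V E src rng"
  shows "ord_top V E rng closure_of perfect_orderings V E src rng v0 = topspace (ord_top V E rng)
     \<and> ord_top V E rng closure_of (topspace (ord_top V E rng) - perfect_orderings V E src rng v0)
         = topspace (ord_top V E rng)"
proof -
  note br = assms(1)
  obtain N0 where N0: "\<And>n. N0 \<le> n \<Longrightarrow> \<exists>x y. x \<in> V n \<and> y \<in> V n \<and> x \<noteq> y"
    using rank_two[OF assms(6,7)] by blast
  define I where "I = (SIGMA n:{1..}. V n)"
  define Xf where "Xf = (\<lambda>(n::nat, v). discrete_topology {R. linear_order_on (in_edges E rng n v) R})"
  have OT: "ord_top V E rng = product_topology Xf I" by (simp add: ord_top_def I_def Xf_def)
  have tXf: "topspace (Xf (n,v)) = {R. linear_order_on (in_edges E rng n v) R}" for n v by (simp add: Xf_def)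
  define pp where "pp m = fst (SOME z. fst z \<in> V m \<and> snd z \<in> V m \<and> fst z \<noteq> snd z)" for m
  define qq where "qq m = snd (SOME z. fst z \<in> V m \<and> snd z \<in> V m \<and> fst z \<noteq> snd z)" for m
  have pq: "pp m \<in> V m \<and> qq m \<in> V m \<and> pp m \<noteq> qq m" if mm: "N0 \<le> m" for m
  proof -
    obtain x y where "x \<in> V m" "y \<in> V m" "x \<noteq> y" using N0[OF mm] by blast
    then have "\<exists>z. fst z \<in> V m \<and> snd z \<in> V m \<and> fst z \<noteq> snd z" by (intro exI[of _ "(x,y)"]) simp
    from someI_ex[OF this] show ?thesis unfolding pp_def qq_def by blast
  qed
  define ch where "ch n w v = (SOME e. e \<in> E n \<and> src n e = w \<and> rng n e = v)" for n w v
  have ch: "ch n w v \<in> E n \<and> src n (ch n w v) = w \<and> rng n (ch n w v) = v"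
    if n1: "1 \<le> n" "w \<in> V (n - 1)" "v \<in> V n" for n w v
  proof -
    obtain m where m: "n = Suc m" using n1(1) by (cases n) auto
    have "0 < incidence E src rng m v w" using assms(8) n1 m unfolding positive_incidence_def by simp
    then have "{e \<in> E (Suc m). src (Suc m) e = w \<and> rng (Suc m) e = v} \<noteq> {}"
      unfolding incidence_def by (metis card.empty less_irrefl)
    then have "\<exists>e. e \<in> E n \<and> src n e = w \<and> rng n e = v" using m by blast
    then show ?thesis unfolding ch_def by (rule someI_ex)
  qed
  have finE: "1 \<le> n \<Longrightarrow> finite (in_edges E rng n v)" for n v
    using br by (auto simp: bratteli_def in_edges_def)
  have key: "perfect_orderings V E src rng v0 \<inter> T \<noteq> {} \<and>
      (topspace (ord_top V E rng) - perfect_orderings V E src rng v0) \<inter> T \<noteq> {}"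
    if T: "openin (ord_top V E rng) T" "T \<noteq> {}" for T
  proof -
    obtain \<omega>0 where w0: "\<omega>0 \<in> T" using T(2) by blast
    have TP: "openin (product_topology Xf I) T" using T(1) OT by simp
    obtain X where X: "\<omega>0 \<in> (\<Pi>\<^sub>E i\<in>I. X i)" "\<forall>i. openin (Xf i) (X i)"
        "finite {i. X i \<noteq> topspace (Xf i)}" "(\<Pi>\<^sub>E i\<in>I. X i) \<subseteq> T"
      using product_topology_open_contains_basis[OF TP w0] by blast
    define J where "J = {i. X i \<noteq> topspace (Xf i)}"
    define N where "N = Suc (N0 + Max (insert 0 (fst ` J)))"
    have NJ: "fst i < N" if "i \<in> J" for i
    proof -
      have "fst i \<le> Max (insert 0 (fst ` J))" using X(3) that unfolding J_def[symmetric] by simp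
      then show ?thesis by (simp add: N_def)
    qed
    have N1: "1 \<le> N" and NN0: "N0 \<le> N" by (simp_all add: N_def)
    have w0top: "\<omega>0 \<in> topspace (product_topology Xf I)" using openin_subset[OF TP] w0 by blast
    have lin0: "linear_order_on (in_edges E rng n v) (\<omega>0 (n,v))" if "1 \<le> n" "v \<in> V n" for n v
    proof -
      have "(n,v) \<in> I" using that by (simp add: I_def)
      then have "\<omega>0 (n,v) \<in> topspace (Xf (n,v))" using w0top by (simp add: PiE_iff)
      then show ?thesis using tXf by simp
    qed
    have modif: "(\<lambda>i. if i \<in> I \<and> N < fst i then R i else \<omega>0 i) \<in> T \<and>
        (\<lambda>i. if i \<in> I \<and> N < fst i then R i else \<omega>0 i) \<in> topspace (ord_top V E rng) \<and>
        (\<forall>n v. 1 \<le> n \<longrightarrow> v \<in> V n \<longrightarrow> linear_order_on (in_edges E rng n v) ((\<lambda>i. if i \<in> I \<and> N < fst i then R i else \<omega>0 i) (n,v)))"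
      if R: "\<And>n v. N < n \<Longrightarrow> v \<in> V n \<Longrightarrow> linear_order_on (in_edges E rng n v) (R (n,v))" for R
    proof -
      define \<omega>' where "\<omega>' = (\<lambda>i. if i \<in> I \<and> N < fst i then R i else \<omega>0 i)"
      have "\<omega>' \<in> (\<Pi>\<^sub>E i\<in>I. X i)"
        unfolding PiE_iff
      proof (intro conjI ballI)
        fix i assume i: "i \<in> I"
        obtain n v where nv: "i = (n,v)" by (cases i)
        show "\<omega>' i \<in> X i"
        proof (cases "N < n")
          case True
          then have "i \<notin> J" using NJ nv by fastforce
          then have "X i = topspace (Xf i)" by (simp add: J_def)
          moreover have "v \<in> V n" using i nv by (simp add: I_def)
          ultimately show ?thesis using R[OF True] True i nv tXf by (simp add: \<omega>'_def)
        next
          case False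
          then show ?thesis using X(1) i nv by (auto simp: \<omega>'_def PiE_iff)
        qed
      next
        show "\<omega>' \<in> extensional I" using X(1) unfolding \<omega>'_def PiE_def extensional_def by auto
      qed
      then have "\<omega>' \<in> T" using X(4) by blast
      moreover have "\<omega>' \<in> topspace (ord_top V E rng)" using openin_subset[OF T(1)] \<open>\<omega>' \<in> T\<close> by blast
      moreover have "linear_order_on (in_edges E rng n v) (\<omega>' (n,v))" if "1 \<le> n" "v \<in> V n" for n v
      proof (cases "N < n")
        case True then show ?thesis using R[OF True that(2)] that by (simp add: \<omega>'_def I_def)
      next
        case False then show ?thesis using lin0[OF that] by (simp add: \<omega>'_def)
      qed
      ultimately show ?thesis unfolding \<omega>'_def by blast
    qed
    have pqN: "pp m \<in> V m \<and> qq m \<in> V m \<and> pp m \<noteq> qq m" if "N \<le> m" for m using pq NN0 that by simp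
    have chN: "ch n w v \<in> in_edges E rng n v \<and> src n (ch n w v) = w" if "N < n" "w \<in> V (n - 1)" "v \<in> V n" for n w v
      using ch[of n w v] that N1 by (simp add: in_edges_def)
    define R1 where "R1 i = ordL (in_edges E rng (fst i) (snd i)) (ch (fst i) (qq (fst i - 1)) (snd i))
                        (ch (fst i) (pp (fst i - 1)) (snd i))" for i
    have R1: "linear_order_on (in_edges E rng n v) (R1 (n,v)) \<and>
        (\<forall>f\<in>in_edges E rng n v. (ch n (qq (n - 1)) v, f) \<in> R1 (n,v)) \<and>
        (\<forall>f\<in>in_edges E rng n v. (f, ch n (pp (n - 1)) v) \<in> R1 (n,v))"
      if "N < n" "v \<in> V n" for n v
    proof -
      have m: "N \<le> n - 1" using that by simp
      have e1: "ch n (qq (n - 1)) v \<in> in_edges E rng n v" "src n (ch n (qq (n - 1)) v) = qq (n - 1)"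
        using chN[OF that(1) _ that(2)] pqN[OF m] by auto
      have e2: "ch n (pp (n - 1)) v \<in> in_edges E rng n v" "src n (ch n (pp (n - 1)) v) = pp (n - 1)"
        using chN[OF that(1) _ that(2)] pqN[OF m] by auto
      have ne: "ch n (qq (n - 1)) v \<noteq> ch n (pp (n - 1)) v" using e1(2) e2(2) pqN[OF m] by metis
      show ?thesis using ordL[OF finE e1(1) e2(1) ne] that N1 unfolding R1_def by simp
    qed
    define \<omega>1 where "\<omega>1 = (\<lambda>i. if i \<in> I \<and> N < fst i then R1 i else \<omega>0 i)"
    have M1: "\<omega>1 \<in> T \<and> \<omega>1 \<in> topspace (ord_top V E rng) \<and>
        (\<forall>n v. 1 \<le> n \<longrightarrow> v \<in> V n \<longrightarrow> linear_order_on (in_edges E rng n v) (\<omega>1 (n,v)))"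
      unfolding \<omega>1_def by (rule modif) (use R1 in blast)
    have w1: "\<omega>1 (n,v) = R1 (n,v)" if "N < n" "v \<in> V n" for n v
      using that by (simp add: \<omega>1_def I_def)
    have ol1: "ordl V E src rng v0 \<omega>1" using br M1 by (intro ordl.intro) auto
    have g1: "goodord V E src rng v0 \<omega>1 N pp qq"
    proof (intro goodord.intro goodord_axioms.intro ol1 N1)
      show "\<And>m. N \<le> m \<Longrightarrow> pp m \<in> V m \<and> qq m \<in> V m" using pqN by blast
      show "src n e = pp (n - 1)" if "N < n" "e \<in> E n" "is_max_edge E rng \<omega>1 n e" for n e
      proof -
        define v where "v = rng n e"
        have v: "v \<in> V n" "e \<in> in_edges E rng n v" using ordl.edge_vert[OF ol1 _ that(2)] that N1
          by (auto simp: v_def in_edges_def)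
        have m: "N \<le> n - 1" using that by simp
        have e2: "ch n (pp (n - 1)) v \<in> in_edges E rng n v" "src n (ch n (pp (n - 1)) v) = pp (n - 1)"
          using chN[OF that(1) _ v(1)] pqN[OF m] by auto
        have "(ch n (pp (n - 1)) v, e) \<in> \<omega>1 (n,v)" using that(3) e2(1) unfolding is_max_edge_def v_def by auto
        moreover have "(e, ch n (pp (n - 1)) v) \<in> \<omega>1 (n,v)" using R1[OF that(1) v(1)] v(2) w1[OF that(1) v(1)] by auto
        ultimately have "e = ch n (pp (n - 1)) v" using lin_antisym R1[OF that(1) v(1)] w1[OF that(1) v(1)] by metis
        then show ?thesis using e2 by simp
      qed
      show "src n e = qq (n - 1)" if "N < n" "e \<in> E n" "is_min_edge E rng \<omega>1 n e" for n e
      proof -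
        define v where "v = rng n e"
        have v: "v \<in> V n" "e \<in> in_edges E rng n v" using ordl.edge_vert[OF ol1 _ that(2)] that N1
          by (auto simp: v_def in_edges_def)
        have m: "N \<le> n - 1" using that by simp
        have e1: "ch n (qq (n - 1)) v \<in> in_edges E rng n v" "src n (ch n (qq (n - 1)) v) = qq (n - 1)"
          using chN[OF that(1) _ v(1)] pqN[OF m] by auto
        have "(e, ch n (qq (n - 1)) v) \<in> \<omega>1 (n,v)" using that(3) e1(1) unfolding is_min_edge_def v_def by auto
        moreover have "(ch n (qq (n - 1)) v, e) \<in> \<omega>1 (n,v)" using R1[OF that(1) v(1)] v(2) w1[OF that(1) v(1)] by auto
        ultimately have "e = ch n (qq (n - 1)) v" using lin_antisym R1[OF that(1) v(1)] w1[OF that(1) v(1)] by metis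
        then show ?thesis using e1 by simp
      qed
    qed
    have "\<omega>1 \<in> perfect_orderings V E src rng v0"
      unfolding perfect_orderings_def using M1 goodord.vershik[OF g1] by blast
    then have P1: "perfect_orderings V E src rng v0 \<inter> T \<noteq> {}" using M1 by blast
    define R2 where "R2 i = (if snd i = pp (fst i) then R1 i
         else if snd i = qq (fst i) then ordF (in_edges E rng (fst i) (snd i)) (ch (fst i) (pp (fst i - 1)) (snd i))
                        (ch (fst i) (qq (fst i - 1)) (snd i))
         else listord (SOME xs. distinct xs \<and> set xs = in_edges E rng (fst i) (snd i)))" for i
    have R2q: "linear_order_on (in_edges E rng n (qq n)) (R2 (n, qq n)) \<and>
        (\<forall>f\<in>in_edges E rng n (qq n). (ch n (pp (n - 1)) (qq n), f) \<in> R2 (n, qq n)) \<and>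
        (\<forall>f\<in>in_edges E rng n (qq n). f \<noteq> ch n (pp (n - 1)) (qq n) \<longrightarrow> (ch n (qq (n - 1)) (qq n), f) \<in> R2 (n, qq n))"
      if "N < n" for n
    proof -
      have m: "N \<le> n - 1" "N \<le> n" using that by simp_all
      have v: "qq n \<in> V n" "qq n \<noteq> pp n" using pqN[OF m(2)] by auto
      have e1: "ch n (pp (n - 1)) (qq n) \<in> in_edges E rng n (qq n)" "src n (ch n (pp (n - 1)) (qq n)) = pp (n - 1)"
        using chN[OF that _ v(1)] pqN[OF m(1)] by auto
      have e2: "ch n (qq (n - 1)) (qq n) \<in> in_edges E rng n (qq n)" "src n (ch n (qq (n - 1)) (qq n)) = qq (n - 1)"
        using chN[OF that _ v(1)] pqN[OF m(1)] by auto
      have ne: "ch n (pp (n - 1)) (qq n) \<noteq> ch n (qq (n - 1)) (qq n)" using e1(2) e2(2) pqN[OF m(1)] by metis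
      show ?thesis using ordF[OF finE e1(1) e2(1) ne] that N1 v unfolding R2_def by simp
    qed
    have R2p: "R2 (n, pp n) = R1 (n, pp n)" for n by (simp add: R2_def)
    have R2lin: "linear_order_on (in_edges E rng n v) (R2 (n,v))" if "N < n" "v \<in> V n" for n v
    proof -
      consider "v = pp n" | "v \<noteq> pp n" "v = qq n" | "v \<noteq> pp n" "v \<noteq> qq n" by blast
      then show ?thesis
      proof cases
        case 1 then show ?thesis using R1[OF that] R2p by simp
      next
        case 2 then show ?thesis using R2q[OF that(1)] by simp
      next
        case 3
        have "finite (in_edges E rng n v)" using finE that N1 by simp
        define xs where "xs = (SOME xs. distinct xs \<and> set xs = in_edges E rng n v)"
        have xs: "distinct xs" "set xs = in_edges E rng n v" using someL[OF \<open>finite (in_edges E rng n v)\<close>] by (simp_all add: xs_def)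
        have "R2 (n,v) = listord xs" using 3 unfolding R2_def xs_def by simp
        then show ?thesis using listord_lin[OF xs(1)] xs(2) by simp
      qed
    qed
    define \<omega>2 where "\<omega>2 = (\<lambda>i. if i \<in> I \<and> N < fst i then R2 i else \<omega>0 i)"
    have M2: "\<omega>2 \<in> T \<and> \<omega>2 \<in> topspace (ord_top V E rng) \<and>
        (\<forall>n v. 1 \<le> n \<longrightarrow> v \<in> V n \<longrightarrow> linear_order_on (in_edges E rng n v) (\<omega>2 (n,v)))"
      unfolding \<omega>2_def by (rule modif) (use R2lin in blast)
    have w2: "\<omega>2 (n,v) = R2 (n,v)" if "N < n" "v \<in> V n" for n v
      using that by (simp add: \<omega>2_def I_def)
    have ol2: "ordl V E src rng v0 \<omega>2" using br M2 by (intro ordl.intro) auto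
    have np: "\<not> vershik_map E src rng v0 \<omega>2 \<phi>" for \<phi>
    proof (rule nonperf[OF ol2 N1])
      show "\<And>m. N \<le> m \<Longrightarrow> pp m \<in> V m \<and> qq m \<in> V m \<and> pp m \<noteq> qq m" using pqN by blast
      show "src n e = pp (n - 1)" if "N < n" "e \<in> E n" "rng n e = pp n" "is_max_edge E rng \<omega>2 n e" for n e
      proof -
        define v where "v = pp n"
        have v: "v \<in> V n" "e \<in> in_edges E rng n v" using pqN[of n] that by (auto simp: v_def in_edges_def)
        have m: "N \<le> n - 1" using that by simp
        have ww: "\<omega>2 (n,v) = R1 (n,v)" using w2[OF that(1) v(1)] R2p by (simp add: v_def)
        have e2: "ch n (pp (n - 1)) v \<in> in_edges E rng n v" "src n (ch n (pp (n - 1)) v) = pp (n - 1)"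
          using chN[OF that(1) _ v(1)] pqN[OF m] by auto
        have "(ch n (pp (n - 1)) v, e) \<in> \<omega>2 (n,v)" using that(3,4) e2(1) unfolding is_max_edge_def v_def by auto
        moreover have "(e, ch n (pp (n - 1)) v) \<in> \<omega>2 (n,v)" using R1[OF that(1) v(1)] v(2) ww by auto
        ultimately have "e = ch n (pp (n - 1)) v" using lin_antisym R1[OF that(1) v(1)] ww by metis
        then show ?thesis using e2 by simp
      qed
      show "src n e = qq (n - 1)" if "N < n" "e \<in> E n" "rng n e = pp n" "is_min_edge E rng \<omega>2 n e" for n e
      proof -
        define v where "v = pp n"
        have v: "v \<in> V n" "e \<in> in_edges E rng n v" using pqN[of n] that by (auto simp: v_def in_edges_def)
        have m: "N \<le> n - 1" using that by simp
        have ww: "\<omega>2 (n,v) = R1 (n,v)" using w2[OF that(1) v(1)] R2p by (simp add: v_def)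
        have e1: "ch n (qq (n - 1)) v \<in> in_edges E rng n v" "src n (ch n (qq (n - 1)) v) = qq (n - 1)"
          using chN[OF that(1) _ v(1)] pqN[OF m] by auto
        have "(e, ch n (qq (n - 1)) v) \<in> \<omega>2 (n,v)" using that(3,4) e1(1) unfolding is_min_edge_def v_def by auto
        moreover have "(ch n (qq (n - 1)) v, e) \<in> \<omega>2 (n,v)" using R1[OF that(1) v(1)] v(2) ww by auto
        ultimately have "e = ch n (qq (n - 1)) v" using lin_antisym R1[OF that(1) v(1)] ww by metis
        then show ?thesis using e1 by simp
      qed
      show "\<exists>e1 e2. e1 \<in> in_edges E rng n (qq n) \<and> e2 \<in> in_edges E rng n (qq n) \<and>
        src n e1 = pp (n - 1) \<and> src n e2 = qq (n - 1) \<and> e1 \<noteq> e2 \<and>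
        (\<forall>f\<in>in_edges E rng n (qq n). (e1,f) \<in> \<omega>2 (n, qq n)) \<and>
        (\<forall>f\<in>in_edges E rng n (qq n). f \<noteq> e1 \<longrightarrow> (e2,f) \<in> \<omega>2 (n, qq n))" if "N < n" for n
      proof -
        have m: "N \<le> n - 1" "N \<le> n" using that by simp_all
        have v: "qq n \<in> V n" using pqN[OF m(2)] by auto
        have e1: "ch n (pp (n - 1)) (qq n) \<in> in_edges E rng n (qq n)" "src n (ch n (pp (n - 1)) (qq n)) = pp (n - 1)"
          using chN[OF that _ v(1)] pqN[OF m(1)] by auto
        have e2: "ch n (qq (n - 1)) (qq n) \<in> in_edges E rng n (qq n)" "src n (ch n (qq (n - 1)) (qq n)) = qq (n - 1)"
          using chN[OF that _ v(1)] pqN[OF m(1)] by auto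
        have ne: "ch n (pp (n - 1)) (qq n) \<noteq> ch n (qq (n - 1)) (qq n)" using e1(2) e2(2) pqN[OF m(1)] by metis
        show ?thesis using e1 e2 ne R2q[OF that] w2[OF that v] by metis
      qed
      show "\<exists>e\<in>E n. src n e = qq (n - 1) \<and> rng n e = qq n" if "N < n" for n
        using ch[of n "qq (n - 1)" "qq n"] pqN[of "n - 1"] pqN[of n] that N1 by auto
    qed
    have "\<omega>2 \<notin> perfect_orderings V E src rng v0"
      unfolding perfect_orderings_def using np by blast
    then have P2: "(topspace (ord_top V E rng) - perfect_orderings V E src rng v0) \<inter> T \<noteq> {}" using M2 by blast
    show ?thesis using P1 P2 by blast
  qed
  show ?thesis unfolding dense_intersects_open using key by blast
qed

end
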